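(* Let $n\ge1$ and let $c\ge n-1$ be an integer. Define $k(n)=c-n+1$ and $k(i)=c-n+i+1$ for $1\le i<n$ (so that $c=k(i)+n-i-1$ for $i<n$ and $c=k(n)+n-1$). Let $a_1,\dots,a_n\in\{0,1,\dots,p-1\}$, not all zero, put $m(i)=a_ip^{k(i)}$, $d=\prod_{i=1}^n d_{n,i}^{m(i)}$, and $$j=\max\big(\{n : a_n\ne0\}\cup\{n-i : 1\le i<n,\ a_i\neq 0\}\big).$$ Then for some nonzero scalar $u\in\mathbb{F}_p$: $P(c,j)(d)=u\,d_{n,n}^{p^{k(n)}}\,d$ if $j=n$, and $P(c,j)(d)=u\,d_{n,n}^{p^{k(n-j)}}\,d\,d_{n,n-j}^{-p^{k(n-j)}}$ if $j<n$ (the latter is a monomial since $a_{n-j}\ge1$). Moreover, $P(c,t)(d)=0$ for every integer $t$ with $j<t\le c+1$.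
   Context: Let $p$ be a prime and $\mathbb{F}_p=\mathbb{Z}/p\mathbb{Z}$. The Dickson algebra $\mathbb{F}_p[y_1,\dots,y_n]^{GL_n(\mathbb{F}_p)}=\mathbb{F}_p[d_{n,1},\dots,d_{n,n}]$ is the polynomial algebra on the Dickson invariants $d_{n,i}$ (the coefficients, up to sign, of $\prod_{v\in \mathbb{F}_p\langle y_1,\dots,y_n\rangle}(X-v)=X^{p^n}+\sum_{i}(-1)^i d_{n,i}X^{p^{n-i}}$), with $|y_i|=2$, $|d_{n,i}|=2(p^n-p^{n-i})$ for $p$ odd and $|y_i|=1$, $|d_{n,i}|=2^n-2^{n-i}$ for $p=2$. The mod $p$ Steenrod algebra acts by reduced powers $P^r$ (for $p=2$, $P^r$ means $Sq^r$). Composites are applied right to left. For integers $c\ge0$, $1\le j\le c+1$: $P(c,j)=P^{p^{c-j+1}}\cdots P^{p^{c-1}}P^{p^{c}}$. *)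

theory Defs
  imports Main "HOL-Library.Poly_Mapping" "HOL-Computational_Algebra.Polynomial"
    "HOL-Computational_Algebra.Primes" "HOL-Library.Cardinality" "HOL-Library.FuncSet"
begin

text \<open>Multivariate polynomials over the coefficient field 'a (a finite field of prime
  cardinality p, i.e. F_p): monomials are finitely supported exponent vectors
  nat =>0 nat (variable y_i has index i), polynomials are finitely supported
  coefficient maps.\<close>

type_synonym 'a mpoly = "(nat \<Rightarrow>\<^sub>0 nat) \<Rightarrow>\<^sub>0 'a"

definition mconst :: "'a::comm_ring_1 \<Rightarrow> 'a mpoly" where
  "mconst c = Poly_Mapping.single 0 c"

definition Y :: "nat \<Rightarrow> 'a::comm_ring_1 mpoly" where
  "Y i = Poly_Mapping.single (Poly_Mapping.single i 1) 1"

text \<open>Total reduced power: the ring homomorphism sending y_i to y_i + t y_i^p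
  (p = CARD('a)), with values polynomials in an auxiliary variable t.\<close>

definition totalP :: "'a::{comm_ring_1,finite} mpoly \<Rightarrow> 'a mpoly poly" where
  "totalP f = (let q = CARD('a) in \<Sum>m\<in>Poly_Mapping.keys f.
      [: mconst (Poly_Mapping.lookup f m) :] *
      (\<Prod>i\<in>Poly_Mapping.keys m. [: Y i, Y i ^ q :] ^ Poly_Mapping.lookup m i))"

definition steenrodP :: "nat \<Rightarrow> 'a::{comm_ring_1,finite} mpoly \<Rightarrow> 'a mpoly" where
  "steenrodP r f = coeff (totalP f) r"

text \<open>P(c,j) = P^{p^{c-j+1}} ... P^{p^{c-1}} P^{p^c} (applied right to left).\<close>

fun Pcj :: "nat \<Rightarrow> nat \<Rightarrow> 'a::{comm_ring_1,finite} mpoly \<Rightarrow> 'a mpoly" where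
  "Pcj c 0 f = f"
| "Pcj c (Suc j) f = steenrodP (CARD('a) ^ (c - j)) (Pcj c j f)"

text \<open>Dickson invariants: prod over v in span(y_1..y_n) of (X - v)
  = X^{p^n} + sum_i (-1)^i d_{n,i} X^{p^{n-i}}.\<close>

definition dickson_poly :: "nat \<Rightarrow> 'a::{comm_ring_1,finite} mpoly poly" where
  "dickson_poly n = (\<Prod>v\<in>(\<lambda>cf. \<Sum>i\<in>{1..n}. mconst (cf i) * Y i) ` (PiE {1..n} (\<lambda>_. UNIV)).
      [: - v, 1 :])"

definition dickson :: "nat \<Rightarrow> nat \<Rightarrow> 'a::{comm_ring_1,finite} mpoly" where
  "dickson n i = (-1) ^ i * coeff (dickson_poly n) (CARD('a) ^ (n - i))"

end

theory Submission
  imports Defs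
begin

section \<open>Characteristic\<close>

lemma of_nat_card_eq_0: "of_nat CARD('a::{field,finite}) = (0::'a)"
proof -
  have "(\<Sum>y\<in>(UNIV::'a set). y + 1) = (\<Sum>y\<in>UNIV. y)"
    by (rule sum.reindex_bij_witness[of _ "\<lambda>y. y - 1" "\<lambda>y. y + 1"]) auto
  hence "(\<Sum>y\<in>(UNIV::'a set). y) + of_nat CARD('a) = (\<Sum>y\<in>UNIV. y)"
    by (simp add: sum.distrib)
  thus ?thesis by simp
qed

lemma CHAR_card:
  assumes "prime CARD('a::{field,finite})"
  shows "CHAR('a) = CARD('a)"
proof -
  have "CHAR('a) dvd CARD('a)"
    using of_nat_card_eq_0[where 'a='a] of_nat_eq_0_iff_char_dvd by blast
  moreover have "CHAR('a) \<noteq> 1"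
    using of_nat_CHAR[where 'a='a] by (metis of_nat_1 one_neq_zero)
  ultimately show ?thesis using assms by (metis prime_nat_iff)
qed

lemma field_power_card:
  fixes x :: "'a :: {field,finite}"
  shows "x ^ CARD('a) = x"
proof (cases "x = 0")
  case False
  have "x * (\<Prod>y\<in>UNIV-{0}. x * y) = x * x ^ (card (UNIV :: 'a set) - 1) * \<Prod>(UNIV-{0})"
    by (simp add: prod.distrib mult_ac)
  also have "x * x ^ (card (UNIV :: 'a set) - 1) = x ^ Suc (card (UNIV :: 'a set) - 1)"
    by (subst power_Suc) auto
  also have "Suc (card (UNIV :: 'a set) - 1) = card (UNIV :: 'a set)"
    using finite_UNIV_card_ge_0[where ?'a = 'a] by simp
  also have "(\<Prod>y\<in>UNIV-{0}. x * y) = (\<Prod>y\<in>UNIV-{0}. y)"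
    by (rule prod.reindex_bij_witness[of _ "\<lambda>y. y / x" "\<lambda>y. x * y"]) (use False in auto)
  finally show ?thesis
    by simp
qed (use finite_UNIV_card_ge_0[where ?'a = 'a] in auto)

lemma field_power_card_pow:
  fixes x :: "'a :: {field,finite}"
  shows "x ^ (CARD('a) ^ e) = x"
proof (induction e)
  case (Suc e)
  have "x ^ (CARD('a) ^ Suc e) = (x ^ (CARD('a) ^ e)) ^ CARD('a)"
    by (simp only: power_Suc2 power_mult)
  thus ?case using Suc by (simp add: field_power_card)
qed simp

lemma CHAR_mpoly: "CHAR('a::comm_ring_1 mpoly) = CHAR('a)"
proof (rule CHAR_eqI)
  show "of_nat CHAR('a) = (0::'a mpoly)"
    by (metis of_nat_CHAR single_of_nat single_zero)
  fix x assume "of_nat x = (0::'a mpoly)"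
  hence "Poly_Mapping.lookup (of_nat x :: 'a mpoly) 0 = 0" by simp
  hence "of_nat x = (0::'a)" by (simp add: lookup_of_nat)
  thus "CHAR('a) dvd x" by (simp add: of_nat_eq_0_iff_char_dvd)
qed

lemma mconst_0[simp]: "mconst 0 = 0" by (simp add: mconst_def)
lemma mconst_1[simp]: "mconst 1 = 1" by (simp add: mconst_def)
lemma mconst_add: "mconst (a + b) = mconst a + mconst b" by (simp add: mconst_def single_add)
lemma mconst_mult: "mconst (a * b) = mconst a * mconst b" by (simp add: mconst_def mult_single)
lemma mconst_uminus: "mconst (- a) = - mconst a" by (simp add: mconst_def single_uminus)
lemma mconst_diff: "mconst (a - b) = mconst a - mconst b" by (simp add: mconst_def single_diff)
lemma mconst_power: "mconst (a ^ k) = mconst a ^ k"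
  by (induction k) (simp_all add: mconst_mult)
lemma mconst_of_nat: "mconst (of_nat k) = of_nat k"
  by (induction k) (simp_all add: mconst_add)
lemma mconst_eq_0_iff[simp]: "mconst a = 0 \<longleftrightarrow> a = 0"
  by (metis lookup_single_eq lookup_zero mconst_def single_zero)

section \<open>totalP is a ring homomorphism\<close>

definition mi :: "(nat \<Rightarrow>\<^sub>0 nat) \<Rightarrow> 'a::{comm_ring_1,finite} mpoly poly" where
  "mi m = (\<Prod>i\<in>Poly_Mapping.keys m. [: Y i, Y i ^ CARD('a) :] ^ Poly_Mapping.lookup m i)"

lemma mi_superset:
  assumes "finite K" "Poly_Mapping.keys m \<subseteq> K"
  shows "(mi m :: 'a::{comm_ring_1,finite} mpoly poly) = (\<Prod>i\<in>K. [: Y i, Y i ^ CARD('a) :] ^ Poly_Mapping.lookup m i)"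
  unfolding mi_def
  by (rule prod.mono_neutral_left) (use assms in \<open>auto simp: in_keys_iff\<close>)

lemma mi_add: "(mi (m1 + m2) :: 'a::{comm_ring_1,finite} mpoly poly) = mi m1 * mi m2"
proof -
  let ?K = "Poly_Mapping.keys m1 \<union> Poly_Mapping.keys m2"
  have "Poly_Mapping.keys (m1 + m2) \<subseteq> ?K" by (rule keys_add)
  thus ?thesis
    by (simp add: mi_superset[of ?K] lookup_add power_add prod.distrib)
qed

lemma mi_0[simp]: "mi 0 = 1" by (simp add: mi_def)

lemma totalP_superset:
  assumes "finite K" "Poly_Mapping.keys f \<subseteq> K"
  shows "totalP f = (\<Sum>m\<in>K. [: mconst (Poly_Mapping.lookup f m) :] * mi m)"
  unfolding totalP_def Let_def mi_def[symmetric]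
  by (rule sum.mono_neutral_left) (use assms in \<open>auto simp: in_keys_iff\<close>)

lemma totalP_add: "totalP (f + g) = totalP f + totalP g"
proof -
  let ?K = "Poly_Mapping.keys f \<union> Poly_Mapping.keys g"
  have "Poly_Mapping.keys (f + g) \<subseteq> ?K" by (rule keys_add)
  thus ?thesis
    by (simp add: totalP_superset[of ?K] lookup_add mconst_add sum.distrib smult_add_left)
qed

lemma totalP_0[simp]: "totalP 0 = 0" by (simp add: totalP_def)

lemma totalP_sum: "totalP (sum f A) = (\<Sum>x\<in>A. totalP (f x))"
  by (induction A rule: infinite_finite_induct) (simp_all add: totalP_add)

lemma totalP_single: "totalP (Poly_Mapping.single m c) = [: mconst c :] * mi m"
  by (subst totalP_superset[of "{m}"]) auto

lemma sum_singles: "f = (\<Sum>m\<in>Poly_Mapping.keys f. Poly_Mapping.single m (Poly_Mapping.lookup f m))"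
proof (rule poly_mapping_eqI)
  fix k
  show "Poly_Mapping.lookup f k = Poly_Mapping.lookup (\<Sum>m\<in>Poly_Mapping.keys f. Poly_Mapping.single m (Poly_Mapping.lookup f m)) k"
    by (cases "k \<in> Poly_Mapping.keys f") (auto simp: lookup_sum lookup_single when_def in_keys_iff)
qed

lemma totalP_single_mult:
  "totalP (Poly_Mapping.single a x * Poly_Mapping.single b y) = totalP (Poly_Mapping.single a x) * totalP (Poly_Mapping.single b y)"
  by (simp add: mult_single totalP_single mi_add mconst_mult mult.commute)

lemma totalP_mult: "totalP (f * g) = totalP f * totalP g"
proof -
  let ?s = "\<lambda>h m. Poly_Mapping.single m (Poly_Mapping.lookup h m)"
  have "f * g = (\<Sum>a\<in>Poly_Mapping.keys f. ?s f a) * (\<Sum>b\<in>Poly_Mapping.keys g. ?s g b)"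
    by (rule arg_cong2[where f=times, OF sum_singles sum_singles])
  also have "\<dots> = (\<Sum>a\<in>Poly_Mapping.keys f. \<Sum>b\<in>Poly_Mapping.keys g. ?s f a * ?s g b)"
    by (simp add: sum_product)
  finally have fg: "totalP (f * g) = (\<Sum>a\<in>Poly_Mapping.keys f. \<Sum>b\<in>Poly_Mapping.keys g. totalP (?s f a * ?s g b))"
    by (simp add: totalP_sum)
  have "totalP f * totalP g = totalP (\<Sum>a\<in>Poly_Mapping.keys f. ?s f a) * totalP (\<Sum>b\<in>Poly_Mapping.keys g. ?s g b)"
    by (rule arg_cong2[where f="\<lambda>x y. totalP x * totalP y", OF sum_singles sum_singles])
  also have "\<dots> = (\<Sum>a\<in>Poly_Mapping.keys f. \<Sum>b\<in>Poly_Mapping.keys g. totalP (?s f a) * totalP (?s g b))"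
    by (simp add: totalP_sum sum_product)
  finally show ?thesis using fg
    by (simp add: totalP_single_mult)
qed

lemma totalP_mconst: "totalP (mconst c) = [: mconst c :]"
  by (simp add: mconst_def totalP_single)

lemma totalP_1[simp]: "totalP 1 = 1"
  using totalP_mconst[of 1] by (simp add: pCons_one)

lemma totalP_Y: "totalP (Y i :: 'a::{comm_ring_1,finite} mpoly) = [: Y i, Y i ^ CARD('a) :]"
  by (simp add: Y_def totalP_single mi_def pCons_one)

lemma totalP_uminus: "totalP (- f) = - totalP f"
proof -
  have "totalP (- f) + totalP f = 0" using totalP_add[of "-f" f] by simp
  thus ?thesis by (simp add: eq_neg_iff_add_eq_0)
qed

lemma totalP_diff: "totalP (f - g) = totalP f - totalP g"
  using totalP_add[of f "-g"] totalP_uminus[of g] by (simp only: diff_conv_add_uminus)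

lemma totalP_power: "totalP (f ^ k) = totalP f ^ k"
  by (induction k) (simp_all only: power_0 totalP_1 power_Suc totalP_mult)

lemma totalP_prod: "totalP (prod f A) = (\<Prod>x\<in>A. totalP (f x))"
  by (induction A rule: infinite_finite_induct) (simp_all add: totalP_mult)

lemma totalP_of_nat: "totalP (of_nat k) = of_nat k"
  by (induction k) (simp_all only: of_nat_0 totalP_0 of_nat_Suc totalP_1 totalP_add)

lemma Y_power: "Y i ^ e = Poly_Mapping.single (Poly_Mapping.single i e) 1"
proof (induction e)
  case (Suc e)
  have "Poly_Mapping.single i e + Poly_Mapping.single i 1 = Poly_Mapping.single i (Suc e)"
    by (simp flip: single_add)
  with Suc show ?case by (simp add: Y_def mult_single power_Suc2 add.commute)
qed (simp add: Y_def)

lemma prod_single1: "(\<Prod>i\<in>A. Poly_Mapping.single (g i) (1::'b::comm_semiring_1)) = Poly_Mapping.single (\<Sum>i\<in>A. g i) 1"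
  by (induction A rule: infinite_finite_induct) (simp_all add: mult_single)

lemma coeff0_mi: "coeff (mi m :: 'a::{comm_ring_1,finite} mpoly poly) 0 = Poly_Mapping.single m 1"
proof -
  have "coeff (mi m :: 'a mpoly poly) 0 = (\<Prod>i\<in>Poly_Mapping.keys m. Y i ^ Poly_Mapping.lookup m i)"
    by (simp add: mi_def poly_prod flip: poly_0_coeff_0)
  also have "\<dots> = Poly_Mapping.single m 1"
    by (simp add: Y_power prod_single1 flip: sum_singles)
  finally show ?thesis .
qed

lemma totalP_coeff0: "coeff (totalP f) 0 = f"
proof -
  have "coeff (totalP f) 0 = (\<Sum>m\<in>Poly_Mapping.keys f. coeff ([: mconst (Poly_Mapping.lookup f m) :] * mi m) 0)"
    by (simp add: totalP_def Let_def mi_def[symmetric] coeff_sum)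
  also have "\<dots> = (\<Sum>m\<in>Poly_Mapping.keys f. Poly_Mapping.single m (Poly_Mapping.lookup f m))"
    by (simp add: coeff0_mi mconst_def mult_single)
  finally show ?thesis by (simp only: sum_singles[symmetric])
qed


section \<open>Frobenius on polynomials\<close>

lemma poly_frob:
  fixes x :: "'b::comm_ring_1 poly"
  assumes "prime CHAR('b)" "P = CHAR('b) ^ q"
  shows "x ^ P = (\<Sum>m\<le>degree x. monom (coeff x m ^ P) (m * P))"
proof -
  have "x ^ P = (\<Sum>m\<le>degree x. monom (coeff x m) m) ^ P"
    by (simp add: poly_as_sum_of_monoms)
  also have "\<dots> = (\<Sum>m\<le>degree x. monom (coeff x m) m ^ P)"
    by (rule freshmans_dream_sum') (use assms in simp_all)
  finally show ?thesis by (simp add: monom_power)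
qed

lemma coeff_frob:
  fixes x :: "'b::comm_ring_1 poly"
  assumes "prime CHAR('b)" "P = CHAR('b) ^ q"
  shows "coeff (x ^ P) (r * P) = coeff x r ^ P"
    and "\<not> P dvd s \<Longrightarrow> coeff (x ^ P) s = 0"
proof -
  have P0: "P > 0" using assms prime_gt_0_nat by simp
  have c: "coeff (x ^ P) s = (\<Sum>m\<le>degree x. if m * P = s then coeff x m ^ P else 0)" for s
    by (simp add: poly_frob[OF assms] coeff_sum)
  show "\<not> P dvd s \<Longrightarrow> coeff (x ^ P) s = 0"
    unfolding c by (rule sum.neutral) (auto simp del: dvd_mult_cancel_right dvd_times_right_cancel_iff)
  show "coeff (x ^ P) (r * P) = coeff x r ^ P"
  proof (cases "r \<le> degree x")
    case True
    have "coeff (x ^ P) (r * P) = (\<Sum>m\<le>degree x. if m = r then coeff x m ^ P else 0)"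
      using P0 by (simp add: c)
    also have "\<dots> = coeff x r ^ P" using True by (simp add: sum.delta)
    finally show ?thesis .
  next
    case False
    hence "coeff x r = 0" by (simp add: coeff_eq_0)
    moreover have "coeff (x ^ P) (r * P) = 0"
      unfolding c using P0 False by (intro sum.neutral) auto
    ultimately show ?thesis using P0 by (simp add: power_0_left)
  qed
qed

lemma coeff_0_prod: "coeff (\<Prod>l\<in>A. f l) 0 = (\<Prod>l\<in>A. coeff (f l :: 'b::comm_semiring_1 poly) 0)"
  by (induction A rule: infinite_finite_induct) (simp_all add: coeff_mult_0)

definition gap :: "nat \<Rightarrow> 'b::zero poly \<Rightarrow> bool" where
  "gap N x \<longleftrightarrow> (\<forall>r. 0 < r \<and> r < N \<longrightarrow> coeff x r = 0)"

lemma gap_mono: "gap N x \<Longrightarrow> M \<le> N \<Longrightarrow> gap M x"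
  by (auto simp: gap_def)

lemma gap_coeff: "gap N x \<Longrightarrow> 0 < r \<Longrightarrow> r < N \<Longrightarrow> coeff x r = 0"
  by (auto simp: gap_def)

lemma gap_const: "gap N [:c:]"
  by (auto simp: gap_def coeff_pCons split: nat.splits)

lemma gap_1: "gap N (1 :: 'b::comm_semiring_1 poly)"
  by (metis gap_const pCons_one)

lemma coeff_mult_gap:
  fixes A B :: "'b::comm_semiring_1 poly"
  assumes "gap N A" "gap N B" "0 < n" "n \<le> N"
  shows "coeff (A * B) n = (if n = N then coeff A 0 * coeff B N + coeff A N * coeff B 0 else 0)"
proof -
  have "coeff (A * B) n = (\<Sum>i\<le>n. coeff A i * coeff B (n - i))" by (rule coeff_mult)
  also have "\<dots> = (\<Sum>i\<in>{0, n}. coeff A i * coeff B (n - i))"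
  proof (rule sum.mono_neutral_right)
    show "\<forall>i\<in>{..n} - {0, n}. coeff A i * coeff B (n - i) = 0"
      using assms by (auto simp: gap_def)
  qed auto
  also have "\<dots> = coeff A 0 * coeff B n + coeff A n * coeff B 0"
    using assms by simp
  finally show ?thesis
    using assms by (auto simp: gap_def)
qed

lemma gap_mult:
  fixes A B :: "'b::comm_semiring_1 poly"
  assumes "gap N A" "gap N B"
  shows "gap N (A * B)"
  using coeff_mult_gap[OF assms] unfolding gap_def by auto

lemma coeff_mult_gapN:
  fixes A B :: "'b::comm_semiring_1 poly"
  assumes "gap N A" "gap N B" "0 < N"
  shows "coeff (A * B) N = coeff A 0 * coeff B N + coeff A N * coeff B 0"
  using coeff_mult_gap[OF assms(1,2) assms(3) order_refl] by simp

lemma gap_prod: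
  fixes f :: "'c \<Rightarrow> 'b::comm_semiring_1 poly"
  assumes "finite A" "\<forall>l\<in>A. gap N (f l)" "0 < N"
  shows "gap N (\<Prod>l\<in>A. f l) \<and>
    coeff (\<Prod>l\<in>A. f l) N = (\<Sum>l\<in>A. coeff (f l) N * (\<Prod>l'\<in>A - {l}. coeff (f l') 0))"
  using assms
proof (induction A rule: finite_induct)
  case empty
  then show ?case by (simp add: gap_1 coeff_1)
next
  case (insert x F)
  have IH: "gap N (\<Prod>l\<in>F. f l)"
    "coeff (\<Prod>l\<in>F. f l) N = (\<Sum>l\<in>F. coeff (f l) N * (\<Prod>l'\<in>F - {l}. coeff (f l') 0))"
    using insert by auto
  have gx: "gap N (f x)" using insert by auto
  have c0: "coeff (\<Prod>l\<in>F. f l) 0 = (\<Prod>l\<in>F. coeff (f l) 0)"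
    by (simp add: coeff_0_prod)
  have "coeff (\<Prod>l\<in>insert x F. f l) N = coeff (f x * (\<Prod>l\<in>F. f l)) N"
    using insert by simp
  also have "\<dots> = coeff (f x) 0 * coeff (\<Prod>l\<in>F. f l) N + coeff (f x) N * coeff (\<Prod>l\<in>F. f l) 0"
    by (rule coeff_mult_gapN[OF gx IH(1) insert.prems(2)])
  also have "\<dots> = (\<Sum>l\<in>insert x F. coeff (f l) N * (\<Prod>l'\<in>insert x F - {l}. coeff (f l') 0))"
  proof -
    have "(\<Sum>l\<in>insert x F. coeff (f l) N * (\<Prod>l'\<in>insert x F - {l}. coeff (f l') 0))
       = coeff (f x) N * (\<Prod>l'\<in>F. coeff (f l') 0) + (\<Sum>l\<in>F. coeff (f l) N * (\<Prod>l'\<in>insert x F - {l}. coeff (f l') 0))"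
      using insert by (simp add: insert_Diff_if)
    also have "(\<Sum>l\<in>F. coeff (f l) N * (\<Prod>l'\<in>insert x F - {l}. coeff (f l') 0))
      = (\<Sum>l\<in>F. coeff (f x) 0 * (coeff (f l) N * (\<Prod>l'\<in>F - {l}. coeff (f l') 0)))"
    proof (rule sum.cong[OF refl])
      fix l assume "l \<in> F"
      hence "insert x F - {l} = insert x (F - {l})" using insert by auto
      thus "coeff (f l) N * (\<Prod>l'\<in>insert x F - {l}. coeff (f l') 0) = coeff (f x) 0 * (coeff (f l) N * (\<Prod>l'\<in>F - {l}. coeff (f l') 0))"
        using insert by (simp add: mult_ac)
    qed
    finally show ?thesis
      by (simp add: IH(2) c0 sum_distrib_left add.commute)
  qed
  finally show ?case using gap_mult[OF gx IH(1)] insert by simp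
qed

lemma gap_power:
  fixes A :: "'b::comm_semiring_1 poly"
  assumes "gap N A" "0 < N"
  shows "gap N (A ^ w) \<and> coeff (A ^ w) N = of_nat w * coeff A N * coeff A 0 ^ (w - 1)"
proof (induction w)
  case 0
  then show ?case using assms by (simp add: gap_1 coeff_1)
next
  case (Suc w)
  have "coeff (A ^ Suc w) N = coeff A 0 * coeff (A ^ w) N + coeff A N * coeff (A ^ w) 0"
    using coeff_mult_gapN[OF assms(1) conjunct1[OF Suc] assms(2)] by (simp only: power_Suc)
  also have "coeff A 0 * (of_nat w * coeff A N * coeff A 0 ^ (w - 1)) = of_nat w * coeff A N * coeff A 0 ^ w"
    by (cases w) (simp_all add: algebra_simps)
  hence "coeff A 0 * coeff (A ^ w) N + coeff A N * coeff (A ^ w) 0 = of_nat (Suc w) * coeff A N * coeff A 0 ^ w"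
    using Suc by (simp add: coeff_0_power algebra_simps)
  finally show ?case using gap_mult[OF assms(1) conjunct1[OF Suc]] by simp
qed

lemma gap_frob:
  fixes x :: "'b::comm_ring_1 poly"
  assumes "prime CHAR('b)" "P = CHAR('b) ^ q" "gap N x"
  shows "gap (N * P) (x ^ P)" "coeff (x ^ P) (N * P) = coeff x N ^ P"
    "coeff (x ^ P) 0 = coeff x 0 ^ P"
proof -
  have P0: "P > 0" using assms prime_gt_0_nat by simp
  show "coeff (x ^ P) (N * P) = coeff x N ^ P" by (rule coeff_frob(1)[OF assms(1,2)])
  show "coeff (x ^ P) 0 = coeff x 0 ^ P" by (simp add: coeff_0_power)
  show "gap (N * P) (x ^ P)"
    unfolding gap_def
  proof (intro allI impI)
    fix r assume r: "0 < r \<and> r < N * P"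
    show "coeff (x ^ P) r = 0"
    proof (cases "P dvd r")
      case True
      then obtain s where s: "r = s * P" by (auto simp: dvd_def mult.commute)
      with r P0 have "0 < s" "s < N" by auto
      hence "coeff x s = 0" using assms(3) by (simp add: gap_def)
      thus ?thesis using coeff_frob(1)[OF assms(1,2), of x s] s P0 by (simp add: power_0_left)
    next
      case False
      thus ?thesis by (rule coeff_frob(2)[OF assms(1,2)])
    qed
  qed
qed


section \<open>Root counting\<close>

lemma poly_zero_by_roots:
  fixes K :: "'b::idom poly"
  assumes "\<forall>i\<ge>N. coeff K i = 0" "finite S" "card S \<ge> N" "\<forall>x\<in>S. poly K x = 0"
  shows "K = 0"
proof (rule ccontr)
  assume K: "K \<noteq> 0"
  hence "N > 0" using assms(1) by (metis leading_coeff_0_iff le0 neq0_conv)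
  have "degree K < N"
  proof -
    have "degree K \<le> N - 1"
      by (rule degree_le) (use assms(1) \<open>N > 0\<close> in auto)
    thus ?thesis using \<open>N > 0\<close> by linarith
  qed
  moreover have "card S \<le> card {x. poly K x = 0}"
    by (rule card_mono) (use assms K poly_roots_finite in auto)
  moreover have "card {x. poly K x = 0} \<le> degree K"
    by (rule card_poly_roots_bound[OF K])
  ultimately show False using assms(3) by linarith
qed

section \<open>Linear forms and Dickson polynomial as product over a vector space\<close>

definition lin :: "nat \<Rightarrow> (nat \<Rightarrow> 'a::comm_ring_1) \<Rightarrow> 'a mpoly" where
  "lin n cf = (\<Sum>i\<in>{1..n}. mconst (cf i) * Y i)"

definition Vs :: "nat \<Rightarrow> 'a::{comm_ring_1,finite} mpoly set" where
  "Vs n = lin n ` PiE {1..n} (\<lambda>_. UNIV)"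

lemma dickson_poly_Vs: "dickson_poly n = (\<Prod>v\<in>Vs n. [: - v, 1 :])"
  by (simp add: dickson_poly_def Vs_def lin_def)

lemma mconst_Y: "mconst c * Y i = Poly_Mapping.single (Poly_Mapping.single i 1) c"
  by (simp add: mconst_def Y_def mult_single)

lemma single1_eq_iff: "(a::'b::zero) \<noteq> 0 \<Longrightarrow> Poly_Mapping.single i a = Poly_Mapping.single j a \<longleftrightarrow> i = j"
  by (metis lookup_single_eq lookup_single_not_eq)

lemma lookup_lin:
  "Poly_Mapping.lookup (lin n cf) (Poly_Mapping.single j 1) = (if j \<in> {1..n} then cf j else 0)"
proof -
  have "Poly_Mapping.lookup (lin n cf) (Poly_Mapping.single j 1) =
      (\<Sum>i\<in>{1..n}. if i = j then cf i else 0)"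
    by (simp add: lin_def lookup_sum mconst_Y lookup_single when_def single1_eq_iff)
  thus ?thesis by (simp add: sum.delta' del: One_nat_def)
qed

lemma lookup_mconst_Y:
  "Poly_Mapping.lookup (mconst c * Y i) (Poly_Mapping.single j 1) = (if i = j then c else 0)"
  by (simp add: mconst_Y lookup_single when_def single1_eq_iff)

lemma inj_lin: "inj_on (lin n) (PiE {1..n} (\<lambda>_. UNIV))"
proof (rule inj_onI)
  fix f g assume f: "f \<in> PiE {1..n} (\<lambda>_. UNIV)" and g: "g \<in> PiE {1..n} (\<lambda>_. UNIV)"
    and eq: "lin n f = lin n g"
  have "\<forall>j\<in>{1..n}. f j = g j"
    using arg_cong[OF eq, of "\<lambda>x. Poly_Mapping.lookup x (Poly_Mapping.single j 1)" for j]
    by (metis lookup_lin)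
  thus "f = g" using f g by (metis PiE_ext)
qed

lemma finite_Vs: "finite (Vs n)"
  unfolding Vs_def by (intro finite_imageI finite_PiE) auto

lemma card_Vs: "card (Vs n :: 'a::{comm_ring_1,finite} mpoly set) = CARD('a) ^ n"
  unfolding Vs_def by (subst card_image[OF inj_lin]) (simp add: card_PiE)

lemma dickson_poly_degree:
  "degree (dickson_poly n :: 'a::{field,finite} mpoly poly) = CARD('a) ^ n"
  "coeff (dickson_poly n :: 'a::{field,finite} mpoly poly) (CARD('a) ^ n) = 1"
proof -
  have d: "degree (dickson_poly n :: 'a mpoly poly) = CARD('a) ^ n"
    unfolding dickson_poly_Vs
    by (subst degree_prod_eq_sum_degree) (auto simp: card_Vs)
  thus "degree (dickson_poly n :: 'a mpoly poly) = CARD('a) ^ n" .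
  have "lead_coeff (dickson_poly n :: 'a mpoly poly) = 1"
    unfolding dickson_poly_Vs lead_coeff_prod by simp
  thus "coeff (dickson_poly n :: 'a::{field,finite} mpoly poly) (CARD('a) ^ n) = 1"
    using d by simp
qed

lemma Vs_Suc:
  "Vs (Suc n) = (\<lambda>(c, w). w + mconst c * Y (Suc n)) ` (UNIV \<times> Vs n)"
proof
  show "Vs (Suc n) \<subseteq> (\<lambda>(c, w). w + mconst c * Y (Suc n)) ` (UNIV \<times> Vs n)"
  proof
    fix v assume "v \<in> Vs (Suc n)"
    then obtain cf where cf: "cf \<in> PiE {1..Suc n} (\<lambda>_. UNIV)" "v = lin (Suc n) cf"
      by (auto simp: Vs_def)
    let ?g = "restrict cf {1..n}"
    have g: "?g \<in> PiE {1..n} (\<lambda>_. UNIV)" by simp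
    have "lin (Suc n) cf = lin n ?g + mconst (cf (Suc n)) * Y (Suc n)"
      by (simp add: lin_def atLeastAtMostSuc_conv)
    moreover have "(cf (Suc n), lin n ?g) \<in> UNIV \<times> Vs n" using g by (simp add: Vs_def)
    ultimately show "v \<in> (\<lambda>(c, w). w + mconst c * Y (Suc n)) ` (UNIV \<times> Vs n)"
      using cf by (intro rev_image_eqI[of "(cf (Suc n), lin n ?g)"]) auto
  qed
next
  show "(\<lambda>(c, w). w + mconst c * Y (Suc n)) ` (UNIV \<times> Vs n) \<subseteq> Vs (Suc n)"
  proof
    fix v assume "v \<in> (\<lambda>(c, w). w + mconst c * Y (Suc n)) ` (UNIV \<times> Vs n)"
    then obtain c w where v: "v = w + mconst c * Y (Suc n)" and "w \<in> Vs n" by auto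
    then obtain cf where cf: "cf \<in> PiE {1..n} (\<lambda>_. UNIV)" "w = lin n cf"
      by (auto simp: Vs_def)
    let ?g = "cf(Suc n := c)"
    have g: "?g \<in> PiE {1..Suc n} (\<lambda>_. UNIV)" using cf(1) by (auto simp: PiE_def extensional_def)
    have "lin (Suc n) ?g = lin n cf + mconst c * Y (Suc n)"
      by (simp add: lin_def atLeastAtMostSuc_conv)
    thus "v \<in> Vs (Suc n)"
      using cf g v unfolding Vs_def by (intro rev_image_eqI[of ?g]) auto
  qed
qed

lemma inj_Vs_Suc:
  "inj_on (\<lambda>(c, w). w + mconst c * Y (Suc n)) (UNIV \<times> (Vs n :: 'a::{comm_ring_1,finite} mpoly set))"
proof (rule inj_onI, clarify)
  fix c c' :: 'a and w w' :: "'a mpoly"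
  assume w: "w \<in> Vs n" "w' \<in> Vs n" and eq: "w + mconst c * Y (Suc n) = w' + mconst c' * Y (Suc n)"
  have z: "Poly_Mapping.lookup u (Poly_Mapping.single (Suc n) 1) = 0" if "u \<in> Vs n" for u :: "'a mpoly"
    using that lookup_lin[of n _ "Suc n"] by (auto simp: Vs_def)
  have "c = c'"
    using arg_cong[OF eq, of "\<lambda>x. Poly_Mapping.lookup x (Poly_Mapping.single (Suc n) 1)"] z[OF w(1)] z[OF w(2)]
    by (simp add: lookup_add mconst_Y lookup_single)
  with eq show "c = c' \<and> w = w'" by simp
qed

lemma dickson_poly_Suc:
  "dickson_poly (Suc n) = (\<Prod>c\<in>(UNIV::'a::{comm_ring_1,finite} set).
      pcompose (dickson_poly n) [: - (mconst c * Y (Suc n)), 1 :])"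
proof -
  have "dickson_poly (Suc n) = (\<Prod>x\<in>UNIV \<times> Vs n. [: - (snd x + mconst (fst x) * Y (Suc n)), 1 :] :: 'a mpoly poly)"
    unfolding dickson_poly_Vs Vs_Suc
    by (subst prod.reindex[OF inj_Vs_Suc]) (simp add: case_prod_beta)
  also have "\<dots> = (\<Prod>c\<in>UNIV. \<Prod>w\<in>Vs n. [: - (w + mconst c * Y (Suc n)), 1 :])"
    by (simp add: prod.cartesian_product case_prod_beta)
  also have "\<dots> = (\<Prod>c\<in>(UNIV::'a set). pcompose (dickson_poly n) [: - (mconst c * Y (Suc n)), 1 :])"
    unfolding dickson_poly_Vs pcompose_prod
    by (intro prod.cong refl) (simp add: pcompose_pCons)
  finally show ?thesis .
qed


definition addv :: "nat \<Rightarrow> 'b::zero poly \<Rightarrow> bool" where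
  "addv q F \<longleftrightarrow> (\<forall>m. coeff F m \<noteq> 0 \<longrightarrow> (\<exists>e. m = q ^ e))"

lemma addv_diff: "addv q F \<Longrightarrow> addv q G \<Longrightarrow> addv q (F - (G :: 'b::ab_group_add poly))"
  unfolding addv_def coeff_diff by (metis diff_self diff_zero)

lemma addv_smult: "addv q F \<Longrightarrow> addv q (smult c (F :: 'b::comm_semiring_0 poly))"
  unfolding addv_def coeff_smult by (metis mult_zero_right)

lemma addv_frob:
  fixes F :: "'b::comm_ring_1 poly"
  assumes "prime CHAR('b)" "addv CHAR('b) F"
  shows "addv CHAR('b) (F ^ CHAR('b))"
  unfolding addv_def
proof (intro allI impI)
  fix m assume m: "coeff (F ^ CHAR('b)) m \<noteq> 0"
  have "CHAR('b) dvd m"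
    using coeff_frob(2)[OF assms(1), of "CHAR('b)" 1] m by auto
  then obtain r where r: "m = r * CHAR('b)" by (auto simp: dvd_def mult.commute)
  have "coeff F r ^ CHAR('b) \<noteq> 0"
    using coeff_frob(1)[OF assms(1), of "CHAR('b)" 1 F r] m r by simp
  hence "coeff F r \<noteq> 0" using prime_gt_0_nat[OF assms(1)] by (auto simp: power_0_left)
  then obtain e where "r = CHAR('b) ^ e" using assms(2) by (auto simp: addv_def)
  thus "\<exists>e. m = CHAR('b) ^ e" using r by (intro exI[of _ "Suc e"]) simp
qed

lemma pcompose_power: "pcompose (p ^ k) r = (pcompose p r) ^ k"
  for p r :: "'b::comm_semiring_1 poly"
  by (induction k) (simp_all add: pcompose_mult pcompose_1)

lemma pcompose_monom: "pcompose (monom c k) r = smult c (r ^ k)"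
  for r :: "'b::comm_semiring_1 poly"
proof -
  have "monom c k = smult c ([:0,1:] ^ k)" by (simp add: monom_altdef)
  thus ?thesis by (simp add: pcompose_smult pcompose_power pcompose_pCons)
qed

lemma const_sum: "[: sum f A :] = (\<Sum>x\<in>A. [: f x :])"
proof (induction A rule: infinite_finite_induct)
  case (insert x F)
  have "[: f x + sum f F :] = [: f x :] + [: sum f F :]" by simp
  thus ?case using insert by simp
qed simp_all

lemma pcompose_additive:
  fixes F :: "'b::comm_ring_1 poly"
  assumes "prime CHAR('b)" "addv CHAR('b) F"
  shows "pcompose F [: b, 1 :] = F + [: poly F b :]"
proof -
  have trm: "smult (coeff F m) ([: b, 1 :] ^ m) = [: coeff F m * b ^ m :] + monom (coeff F m) m" for m
  proof (cases "coeff F m = 0")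
    case False
    then obtain e where e: "m = CHAR('b) ^ e" using assms(2) by (auto simp: addv_def)
    have "[: b, 1 :] = [: b :] + monom 1 1" by (simp add: monom_altdef)
    hence "[: b, 1 :] ^ m = [: b :] ^ m + monom 1 1 ^ m"
      using freshmans_dream'[where 'a="'b poly", of m e] assms(1) e by simp
    thus ?thesis by (simp add: monom_power poly_const_pow smult_add_right smult_monom)
  qed simp
  have "pcompose F [: b, 1 :] = pcompose (\<Sum>m\<le>degree F. monom (coeff F m) m) [: b, 1 :]"
    by (simp add: poly_as_sum_of_monoms)
  also have "\<dots> = (\<Sum>m\<le>degree F. [: coeff F m * b ^ m :] + monom (coeff F m) m)"
    by (simp add: pcompose_sum pcompose_monom trm)
  also have "\<dots> = [: poly F b :] + F"
    by (simp add: sum.distrib poly_altdef const_sum poly_as_sum_of_monoms)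
  finally show ?thesis by simp
qed

definition Fd :: "nat \<Rightarrow> 'a::{comm_ring_1,finite} mpoly poly" where "Fd n = dickson_poly n"

context
  fixes dummy :: "'a::{field,finite}"
  assumes p_prime: "prime CARD('a)"
begin

lemma CHAR_a: "CHAR('a) = CARD('a)" using CHAR_card[OF p_prime] .

lemma CHAR_m: "CHAR('a mpoly) = CARD('a)" by (simp add: CHAR_mpoly CHAR_a)

lemma prime_CHAR_m: "prime CHAR('a mpoly)" by (simp add: CHAR_m p_prime)

lemma card_ge2: "CARD('a) \<ge> 2" using p_prime prime_ge_2_nat by blast

lemma poly_addv_scal:
  fixes F :: "'a mpoly poly"
  assumes "addv CARD('a) F"
  shows "poly F (mconst c * x) = mconst c * poly F x"
proof -
  have t: "coeff F m * (mconst c * x) ^ m = mconst c * (coeff F m * x ^ m)" for m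
  proof (cases "coeff F m = 0")
    case False
    then obtain e where e: "m = CARD('a) ^ e" using assms by (auto simp: addv_def)
    have "mconst c ^ m = mconst c" by (simp add: e field_power_card_pow flip: mconst_power)
    thus ?thesis by (simp add: power_mult_distrib mult_ac)
  qed simp
  show ?thesis by (simp only: poly_altdef sum_distrib_left t)
qed

lemma prod_lambda:
  fixes b :: "'a mpoly"
  shows "(\<Prod>c\<in>(UNIV::'a set). [: - (mconst c * b), 1 :]) = monom 1 CARD('a) - monom (b ^ (CARD('a) - 1)) 1"
proof (cases "b = 0")
  case True
  have "b ^ (CARD('a) - 1) = 0" using True card_ge2 by simp
  thus ?thesis using True by (simp add: monom_altdef)
next
  case False
  let ?L = "(\<Prod>c\<in>(UNIV::'a set). [: - (mconst c * b), 1 :])"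
  let ?R = "monom 1 CARD('a) - monom (b ^ (CARD('a) - 1)) 1 :: 'a mpoly poly"
  have dL: "degree ?L = CARD('a)"
    by (subst degree_prod_eq_sum_degree) auto
  have lL: "coeff ?L CARD('a) = 1"
    using lead_coeff_prod[of "\<lambda>c. [: - (mconst c * b), 1 :]" UNIV] dL by simp
  have "?L - ?R = 0"
  proof (rule poly_zero_by_roots[of "CARD('a)" _ "(\<lambda>c. mconst c * b) ` UNIV"])
    show "\<forall>i\<ge>CARD('a). coeff (?L - ?R) i = 0"
    proof (intro allI impI)
      fix i assume i: "CARD('a) \<le> i"
      show "coeff (?L - ?R) i = 0"
      proof (cases "i = CARD('a)")
        case True thus ?thesis using lL card_ge2 by simp
      next
        case False
        hence "coeff ?L i = 0" using i dL by (intro coeff_eq_0) simp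
        thus ?thesis using i False card_ge2 by simp
      qed
    qed
    show "finite ((\<lambda>c. mconst c * b) ` (UNIV::'a set))" by simp
    have "inj (\<lambda>c. mconst c * b)"
    proof (rule injI)
      fix c c' assume "mconst c * b = mconst c' * b"
      hence "mconst (c - c') * b = 0" by (simp add: mconst_diff algebra_simps)
      thus "c = c'" using False by simp
    qed
    thus "CARD('a) \<le> card ((\<lambda>c. mconst c * b) ` (UNIV::'a set))"
      by (simp add: card_image)
    show "\<forall>x\<in>(\<lambda>c. mconst c * b) ` UNIV. poly (?L - ?R) x = 0"
    proof
      fix x assume "x \<in> (\<lambda>c. mconst c * b) ` (UNIV::'a set)"
      then obtain c0 where x: "x = mconst c0 * b" by auto
      have "poly ?L x = 0"
        unfolding poly_prod by (rule prod_zero) (auto simp: x intro!: bexI[of _ c0])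
      moreover have "poly ?R x = 0"
      proof -
        have "b ^ (CARD('a) - 1) * b = b ^ CARD('a)"
          using card_ge2 by (metis Suc_diff_le le_trans one_le_numeral power_Suc2 Suc_1 diff_Suc_1)
        hence "b ^ (CARD('a) - 1) * x = mconst c0 * b ^ CARD('a)" by (simp add: x mult_ac)
        moreover have "x ^ CARD('a) = mconst c0 * b ^ CARD('a)"
          by (simp add: x power_mult_distrib field_power_card flip: mconst_power)
        ultimately show ?thesis by (simp add: poly_monom)
      qed
      ultimately show "poly (?L - ?R) x = 0" by simp
    qed
  qed
  thus ?thesis by simp
qed


lemma Fd_0: "(Fd 0 :: 'a mpoly poly) = [: 0, 1 :]"
proof -
  have "Vs 0 = {0 :: 'a mpoly}" by (simp add: Vs_def lin_def)
  thus ?thesis by (simp add: Fd_def dickson_poly_Vs)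
qed

lemma Fd_Suc:
  assumes "addv CARD('a) (Fd n :: 'a mpoly poly)"
  shows "(Fd (Suc n) :: 'a mpoly poly) = Fd n ^ CARD('a) - smult (poly (Fd n) (Y (Suc n)) ^ (CARD('a) - 1)) (Fd n)"
proof -
  let ?b = "poly (Fd n) (Y (Suc n))"
  have A: "addv CHAR('a mpoly) (Fd n :: 'a mpoly poly)" using assms by (simp add: CHAR_m)
  have "Fd (Suc n) = (\<Prod>c\<in>(UNIV::'a set). pcompose (Fd n) [: - (mconst c * Y (Suc n)), 1 :])"
    by (simp add: Fd_def dickson_poly_Suc)
  also have "\<dots> = (\<Prod>c\<in>(UNIV::'a set). pcompose [: - (mconst c * ?b), 1 :] (Fd n))"
  proof (rule prod.cong[OF refl])
    fix c :: 'a
    have "poly (Fd n) (- (mconst c * Y (Suc n))) = - (mconst c * ?b)"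
      using poly_addv_scal[OF assms, of "- c" "Y (Suc n)"] by (simp add: mconst_uminus)
    thus "pcompose (Fd n) [: - (mconst c * Y (Suc n)), 1 :] = pcompose [: - (mconst c * ?b), 1 :] (Fd n)"
      by (simp add: pcompose_additive[OF prime_CHAR_m A] pcompose_pCons)
  qed
  also have "\<dots> = pcompose (\<Prod>c\<in>(UNIV::'a set). [: - (mconst c * ?b), 1 :]) (Fd n)"
    by (simp add: pcompose_prod)
  also have "\<dots> = Fd n ^ CARD('a) - smult (?b ^ (CARD('a) - 1)) (Fd n)"
    by (simp add: prod_lambda pcompose_diff pcompose_monom)
  finally show ?thesis .
qed

lemma addv_Fd: "addv CARD('a) (Fd n :: 'a mpoly poly)"
proof (induction n)
  case 0
  show ?case by (auto simp: Fd_0 addv_def coeff_pCons split: nat.splits intro: exI[of _ 0])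
next
  case (Suc n)
  have "addv CARD('a) ((Fd n :: 'a mpoly poly) ^ CARD('a))"
    using addv_frob[OF prime_CHAR_m, of "Fd n :: 'a mpoly poly"] Suc by (simp add: CHAR_m)
  thus ?case using Suc by (simp add: Fd_Suc addv_diff addv_smult)
qed

end


lemma coeff_psum_pow:
  fixes a :: "nat \<Rightarrow> 'b::comm_ring_1"
  assumes "q \<ge> 2"
  shows "coeff (\<Sum>e\<le>N. monom (a e) (q ^ e)) (q ^ k) = (if k \<le> N then a k else 0)"
proof -
  have "coeff (\<Sum>e\<le>N. monom (a e) (q ^ e)) (q ^ k) = (\<Sum>e\<le>N. if e = k then a e else 0)"
    unfolding coeff_sum using assms by (intro sum.cong refl) (simp add: power_inject_exp)
  thus ?thesis by simp
qed

lemma coeff_psum_other: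
  fixes a :: "nat \<Rightarrow> 'b::comm_ring_1"
  assumes "\<forall>k. m \<noteq> q ^ k"
  shows "coeff (\<Sum>e\<le>N. monom (a e) (q ^ e)) m = 0"
  unfolding coeff_sum using assms by (intro sum.neutral) auto

lemma smult_sum_right: "smult c (sum f A) = (\<Sum>x\<in>A. smult c (f x))"
  by (induction A rule: infinite_finite_induct) (simp_all add: smult_add_right)

lemma pair_eq: "[: x, y :] = [: x :] + monom y 1"
  by (simp add: monom_Suc monom_0)

abbreviation tt :: "nat \<Rightarrow> 'a::{comm_ring_1,finite} mpoly poly" where
  "tt k \<equiv> monom 1 k"

context
  fixes dummy :: "'a::{field,finite}" and n :: nat
  assumes p_prime: "prime CARD('a)"
begin


definition cc :: "nat \<Rightarrow> 'a mpoly" where "cc e = coeff (Fd n) (CARD('a) ^ e)"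
definition CC :: "nat \<Rightarrow> 'a mpoly poly" where "CC e = totalP (cc e)"

lemma p2: "CARD('a) \<ge> 2" using card_ge2[OF p_prime] .

lemma cc_n: "cc n = 1"
  using dickson_poly_degree(2)[where 'a='a] by (simp add: cc_def Fd_def)

lemma CC_n: "CC n = 1" by (simp add: CC_def cc_n)

lemma Fd_psum: "Fd n = (\<Sum>e\<le>n. monom (cc e) (CARD('a) ^ e))"
proof (rule poly_eqI)
  fix m
  show "coeff (Fd n) m = coeff (\<Sum>e\<le>n. monom (cc e) (CARD('a) ^ e)) m"
  proof (cases "\<exists>k. m = CARD('a) ^ k")
    case True
    then obtain k where k: "m = CARD('a) ^ k" by auto
    show ?thesis
    proof (cases "k \<le> n")
      case True thus ?thesis using k p2 by (simp add: coeff_psum_pow cc_def)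
    next
      case False
      hence "CARD('a) ^ n < CARD('a) ^ k" using p2 by (simp add: power_strict_increasing)
      moreover have "degree (Fd n :: 'a mpoly poly) = CARD('a) ^ n" by (simp add: Fd_def dickson_poly_degree)
      ultimately have "coeff (Fd n :: 'a mpoly poly) m = 0" using k by (intro coeff_eq_0) simp
      thus ?thesis using False k p2 by (simp add: coeff_psum_pow)
    qed
  next
    case False
    hence "coeff (Fd n :: 'a mpoly poly) m = 0" using addv_Fd[OF p_prime, of n] by (auto simp: addv_def)
    thus ?thesis using False by (simp add: coeff_psum_other)
  qed
qed

lemma Fd_root: "(v::'a mpoly) \<in> Vs n \<Longrightarrow> poly (Fd n) v = 0"
proof -
  assume v: "v \<in> Vs n"
  have "poly (Fd n) v = (\<Prod>w\<in>Vs n. poly [: - w, 1 :] v)"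
    by (simp add: Fd_def dickson_poly_Vs poly_prod)
  also have "\<dots> = 0" using v by (intro prod_zero) (auto simp: finite_Vs)
  finally show ?thesis .
qed

lemma totalP_Vs: "(v::'a mpoly) \<in> Vs n \<Longrightarrow> totalP v = [: v :] + monom (v ^ CARD('a)) 1"
proof -
  assume "v \<in> Vs n"
  then obtain cf where v: "v = lin n cf" by (auto simp: Vs_def)
  have vs: "v = (\<Sum>i\<in>{1..n}. mconst (cf i) * Y i)" by (simp add: v lin_def)
  have "(\<Sum>i\<in>{1..n}. mconst (cf i) * Y i) ^ CARD('a) = (\<Sum>i\<in>{1..n}. (mconst (cf i) * Y i) ^ CARD('a))"
    by (rule freshmans_dream_sum) (simp_all add: prime_CHAR_m[OF p_prime] CHAR_m[OF p_prime] p_prime)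
  also have "\<dots> = (\<Sum>i\<in>{1..n}. mconst (cf i) * Y i ^ CARD('a))"
    by (simp add: power_mult_distrib field_power_card flip: mconst_power)
  finally have vp: "(\<Sum>i\<in>{1..n}. mconst (cf i) * Y i) ^ CARD('a) = (\<Sum>i\<in>{1..n}. mconst (cf i) * Y i ^ CARD('a))" .
  have "totalP v = (\<Sum>i\<in>{1..n}. [: mconst (cf i) :] * [: Y i, Y i ^ CARD('a) :])"
    by (simp add: v lin_def totalP_sum totalP_mult totalP_mconst totalP_Y)
  also have "\<dots> = (\<Sum>i\<in>{1..n}. [: mconst (cf i) * Y i :] + monom (mconst (cf i) * Y i ^ CARD('a)) 1)"
    by (intro sum.cong refl) (simp add: pair_eq algebra_simps smult_monom)
  also have "\<dots> = [: \<Sum>i\<in>{1..n}. mconst (cf i) * Y i :] + monom (\<Sum>i\<in>{1..n}. mconst (cf i) * Y i ^ CARD('a)) 1"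
    by (simp only: sum.distrib const_sum monom_sum)
  also have "\<dots> = [: v :] + monom (v ^ CARD('a)) 1"
    by (simp only: vs vp)
  finally show ?thesis .
qed

lemma monom_tt: "tt k * [: w :] = monom w k"
  by (simp add: mult_monom flip: monom_0)

lemma poly_Fd: "poly (Fd n) (v::'a mpoly) = (\<Sum>e\<le>n. cc e * v ^ (CARD('a) ^ e))"
  by (subst Fd_psum) (simp add: poly_sum poly_monom)

definition hh :: "nat \<Rightarrow> 'a mpoly poly" where
  "hh e = (if e \<le> n then CC e else 0) + (if 0 < e then CC (e - 1) * tt (CARD('a) ^ (e - 1)) else 0)"
definition f1 :: "nat \<Rightarrow> 'a mpoly poly" where
  "f1 e = (if e \<le> n then [: cc e :] else 0)"
definition f2 :: "nat \<Rightarrow> 'a mpoly poly" where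
  "f2 e = (if 0 < e then [: cc (e - 1) :] ^ CARD('a) else 0)"
definition psum :: "(nat \<Rightarrow> 'a mpoly poly) \<Rightarrow> 'a mpoly poly poly" where
  "psum a = (\<Sum>e\<le>Suc n. monom (a e) (CARD('a) ^ e))"

lemma psum_f1_root: "(v::'a mpoly) \<in> Vs n \<Longrightarrow> poly (psum f1) [: v :] = 0"
proof -
  assume v: "v \<in> Vs n"
  have "poly (psum f1) [: v :] = (\<Sum>e\<le>n. [: cc e :] * [: v ^ (CARD('a) ^ e) :])"
    unfolding psum_def f1_def poly_sum
    by (subst sum.atMost_Suc) (simp add: poly_monom poly_const_pow)
  also have "\<dots> = [: poly (Fd n) v :]"
    unfolding poly_Fd const_sum by (intro sum.cong refl) simp
  finally show ?thesis using Fd_root[OF v] by simp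
qed

lemma psum_f2: "psum f1 ^ CARD('a) = psum f2"
proof -
  have "psum f1 ^ CARD('a) = (\<Sum>e\<le>Suc n. monom (f1 e) (CARD('a) ^ e) ^ CARD('a))"
    unfolding psum_def
    by (rule freshmans_dream_sum) (simp_all add: prime_CHAR_m[OF p_prime] CHAR_m[OF p_prime] p_prime)
  also have "\<dots> = (\<Sum>e\<le>Suc n. monom (f1 e ^ CARD('a)) (CARD('a) ^ Suc e))"
    by (simp add: monom_power mult.commute)
  also have "\<dots> = (\<Sum>e\<le>n. monom ([: cc e :] ^ CARD('a)) (CARD('a) ^ Suc e))"
    using p2 by (subst sum.atMost_Suc) (simp add: f1_def)
  also have "\<dots> = psum f2"
    unfolding psum_def by (subst sum.atMost_Suc_shift) (simp add: f2_def)
  finally show ?thesis .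
qed

lemma psum_hh_root: "(v::'a mpoly) \<in> Vs n \<Longrightarrow> poly (psum hh) [: v :] = 0"
proof -
  assume v: "v \<in> Vs n"
  have tp: "totalP v ^ (CARD('a) ^ e) = [: v ^ (CARD('a) ^ e) :] + tt (CARD('a) ^ e) * [: v ^ (CARD('a) ^ Suc e) :]" for e
  proof -
    have "totalP v ^ (CARD('a) ^ e) = [: v :] ^ (CARD('a) ^ e) + monom (v ^ CARD('a)) 1 ^ (CARD('a) ^ e)"
      unfolding totalP_Vs[OF v]
      by (rule freshmans_dream') (simp_all add: prime_CHAR_m[OF p_prime] CHAR_m[OF p_prime] p_prime)
    moreover have "(v ^ CARD('a)) ^ (CARD('a) ^ e) = v ^ (CARD('a) ^ Suc e)"
      by (simp only: power_Suc power_mult)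
    ultimately show ?thesis
      by (simp add: poly_const_pow monom_power monom_tt smult_monom)
  qed
  have "totalP (poly (Fd n) v) = (\<Sum>e\<le>n. CC e * totalP v ^ (CARD('a) ^ e))"
    by (simp add: poly_Fd totalP_sum totalP_mult totalP_power CC_def)
  hence z: "(\<Sum>e\<le>n. CC e * totalP v ^ (CARD('a) ^ e)) = 0" using Fd_root[OF v] by simp
  let ?w = "\<lambda>e. [: v ^ (CARD('a) ^ e) :]"
  have "poly (psum hh) [: v :] = (\<Sum>e\<le>Suc n. hh e * ?w e)"
    unfolding psum_def poly_sum poly_monom poly_const_pow ..
  also have "\<dots> = (\<Sum>e\<le>Suc n. (if e \<le> n then CC e else 0) * ?w e) +
      (\<Sum>e\<le>Suc n. (if 0 < e then CC (e - 1) * tt (CARD('a) ^ (e - 1)) else 0) * ?w e)"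
    unfolding hh_def distrib_right sum.distrib ..
  also have "(\<Sum>e\<le>Suc n. (if e \<le> n then CC e else 0) * ?w e) = (\<Sum>e\<le>n. CC e * ?w e)"
    by (simp only: sum.atMost_Suc) simp
  also have "(\<Sum>e\<le>Suc n. (if 0 < e then CC (e - 1) * tt (CARD('a) ^ (e - 1)) else 0) * ?w e)
      = (\<Sum>e\<le>n. CC e * (tt (CARD('a) ^ e) * ?w (Suc e)))"
    by (simp only: sum.atMost_Suc_shift) (simp add: mult.assoc)
  also have "(\<Sum>e\<le>n. CC e * ?w e) + (\<Sum>e\<le>n. CC e * (tt (CARD('a) ^ e) * ?w (Suc e)))
      = (\<Sum>e\<le>n. CC e * totalP v ^ (CARD('a) ^ e))"
    unfolding tp distrib_left sum.distrib ..
  finally show ?thesis using z by simp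
qed

definition beta :: "'a mpoly poly" where "beta = hh n - tt (CARD('a) ^ n) * f2 n"

definition KK :: "'a mpoly poly poly" where
  "KK = psum hh - smult (tt (CARD('a) ^ n)) (psum f2) - smult beta (psum f1)"

lemma KK_psum: "KK = psum (\<lambda>e. hh e - tt (CARD('a) ^ n) * f2 e - beta * f1 e)"
  unfolding KK_def psum_def smult_sum_right smult_monom sum_subtractf[symmetric] diff_monom ..

lemma KK_zero: "KK = 0"
proof (rule poly_zero_by_roots[of "CARD('a) ^ n" _ "(\<lambda>v. [: v :]) ` (Vs n :: 'a mpoly set)"])
  show "\<forall>i\<ge>CARD('a) ^ n. coeff KK i = 0"
  proof (intro allI impI)
    fix i assume i: "CARD('a) ^ n \<le> i"
    show "coeff KK i = 0"
    proof (cases "\<exists>k. i = CARD('a) ^ k")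
      case True
      then obtain k where k: "i = CARD('a) ^ k" by auto
      hence kn: "n \<le> k" using i p2 by (metis power_le_imp_le_exp Suc_1 Suc_le_eq)
      show ?thesis
      proof (cases "k = n")
        case True thus ?thesis using p2 unfolding k KK_psum psum_def coeff_psum_pow[OF p2]
          by (simp add: beta_def f1_def cc_n)
      next
        case False
        show ?thesis
        proof (cases "k = Suc n")
          case True thus ?thesis using p2 unfolding k KK_psum psum_def coeff_psum_pow[OF p2]
            by (simp add: f1_def f2_def hh_def CC_n cc_n pCons_one)
        next
          case False
          thus ?thesis using p2 kn \<open>k \<noteq> n\<close> unfolding k KK_psum psum_def coeff_psum_pow[OF p2] by simp
        qed
      qed
    next
      case False thus ?thesis unfolding KK_psum psum_def by (intro coeff_psum_other) simp
    qed
  qed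
  show "finite ((\<lambda>v. [: v :]) ` (Vs n :: 'a mpoly set))" by (simp add: finite_Vs)
  have "inj_on (\<lambda>v. [: v :]) (Vs n :: 'a mpoly set)" by (auto intro: inj_onI)
  thus "CARD('a) ^ n \<le> card ((\<lambda>v. [: v :]) ` (Vs n :: 'a mpoly set))" by (simp add: card_image card_Vs)
  show "\<forall>x\<in>(\<lambda>v. [: v :]) ` (Vs n :: 'a mpoly set). poly KK x = 0"
    using psum_hh_root psum_f1_root by (auto simp: KK_def psum_f2[symmetric])
qed

lemma rec_all: "e \<le> Suc n \<Longrightarrow> hh e = tt (CARD('a) ^ n) * f2 e + beta * f1 e"
proof -
  assume e: "e \<le> Suc n"
  have "coeff KK (CARD('a) ^ e) = 0" by (simp add: KK_zero)
  thus ?thesis using e p2 unfolding KK_psum psum_def coeff_psum_pow[OF p2] by (simp add: algebra_simps)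
qed


lemma coeff_tt_mult: "coeff (tt k * x) r = (if r < k then 0 else coeff x (r - k))"
  by (simp add: coeff_monom_mult)

lemma R0: "CC 0 = beta * [: cc 0 :]"
  using rec_all[of 0] by (simp add: hh_def f1_def f2_def)

lemma Re: "0 < e \<Longrightarrow> e \<le> n \<Longrightarrow>
  CC e = beta * [: cc e :] + tt (CARD('a) ^ n) * [: cc (e - 1) :] ^ CARD('a) - CC (e - 1) * tt (CARD('a) ^ (e - 1))"
  using rec_all[of e] by (simp add: hh_def f1_def f2_def algebra_simps)

lemma pow_lt: "a < b \<Longrightarrow> CARD('a) ^ a < CARD('a) ^ b"
  using p2 by (simp add: power_strict_increasing)

lemma CC_coeff0: "coeff (CC e) 0 = cc e"
  by (simp add: CC_def totalP_coeff0)

context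
  assumes n1: "1 \<le> n"
begin

lemma beta_eq: "beta = 1 + CC (n - 1) * tt (CARD('a) ^ (n - 1)) - tt (CARD('a) ^ n) * [: cc (n - 1) :] ^ CARD('a)"
  using Re[of n] n1 by (simp add: CC_n cc_n algebra_simps)

lemma beta_coeff:
  "coeff beta 0 = 1"
  "0 < r \<Longrightarrow> r < CARD('a) ^ (n - 1) \<Longrightarrow> coeff beta r = 0"
  "coeff beta (CARD('a) ^ (n - 1)) = cc (n - 1)"
proof -
  have pp: "CARD('a) ^ (n - 1) < CARD('a) ^ n" using n1 by (intro pow_lt) simp
  have p0: "0 < CARD('a) ^ (n - 1)" using p2 by simp
  have cb: "coeff beta r = coeff 1 r + (if r < CARD('a) ^ (n - 1) then 0 else coeff (CC (n - 1)) (r - CARD('a) ^ (n - 1)))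
     - (if r < CARD('a) ^ n then 0 else coeff ([: cc (n - 1) :] ^ CARD('a)) (r - CARD('a) ^ n))" for r
    unfolding beta_eq by (simp add: coeff_tt_mult mult.commute[of "CC _"])
  show "coeff beta 0 = 1" using p0 pp by (simp add: cb)
  show "0 < r \<Longrightarrow> r < CARD('a) ^ (n - 1) \<Longrightarrow> coeff beta r = 0" using pp by (simp add: cb coeff_1)
  show "coeff beta (CARD('a) ^ (n - 1)) = cc (n - 1)" using pp p0 by (simp add: cb CC_coeff0 coeff_1)
qed

lemma CC0_coeff:
  "0 < r \<Longrightarrow> r < CARD('a) ^ (n - 1) \<Longrightarrow> coeff (CC 0) r = 0"
  "coeff (CC 0) (CARD('a) ^ (n - 1)) = cc (n - 1) * cc 0"
  using beta_coeff by (simp_all add: R0)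

lemma CCe_coeff:
  assumes "0 < e" "e < n"
  shows "0 < r \<Longrightarrow> r < CARD('a) ^ (e - 1) \<Longrightarrow> coeff (CC e) r = 0"
    and "coeff (CC e) (CARD('a) ^ (e - 1)) = - cc (e - 1)"
proof -
  have a: "CARD('a) ^ (e - 1) < CARD('a) ^ (n - 1)" using assms by (intro pow_lt) simp
  have b: "CARD('a) ^ (n - 1) < CARD('a) ^ n" using n1 by (intro pow_lt) simp
  have c: "coeff (CC e) r = coeff beta r * cc e
      + (if r < CARD('a) ^ n then 0 else coeff ([: cc (e - 1) :] ^ CARD('a)) (r - CARD('a) ^ n))
      - (if r < CARD('a) ^ (e - 1) then 0 else coeff (CC (e - 1)) (r - CARD('a) ^ (e - 1)))" for r
    using Re[of e] assms by (simp add: coeff_tt_mult mult.commute[of "CC _"])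
  show "0 < r \<Longrightarrow> r < CARD('a) ^ (e - 1) \<Longrightarrow> coeff (CC e) r = 0"
    using a b by (simp add: c beta_coeff)
  show "coeff (CC e) (CARD('a) ^ (e - 1)) = - cc (e - 1)"
    using a b p2 by (simp add: c beta_coeff CC_coeff0)
qed

end

lemma dickson_cc: "i \<le> n \<Longrightarrow> (dickson n i :: 'a mpoly) = (-1) ^ i * cc (n - i)"
  by (simp add: dickson_def cc_def Fd_def)

lemma totalP_dickson: "i \<le> n \<Longrightarrow> totalP (dickson n i :: 'a mpoly) = smult ((-1) ^ i) (CC (n - i))"
proof -
  assume "i \<le> n"
  hence "totalP (dickson n i :: 'a mpoly) = (-1) ^ i * CC (n - i)"
    by (simp add: dickson_cc totalP_mult totalP_power totalP_uminus CC_def)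
  also have "(-1 :: 'a mpoly poly) ^ i = [: (-1) ^ i :]"
  proof -
    have "(-1 :: 'a mpoly poly) = - [: 1 :]" by (simp add: pCons_one)
    also have "\<dots> = [: -1 :]" by simp
    finally show ?thesis by (simp add: poly_const_pow)
  qed
  finally show ?thesis by simp
qed

end

lemma M3:
  fixes dummy :: "'a::{field,finite}"
  assumes "prime CARD('a)" "1 \<le> n"
  shows "gap (CARD('a) ^ (n - 1)) (totalP (dickson n n :: 'a mpoly))"
    "coeff (totalP (dickson n n :: 'a mpoly)) (CARD('a) ^ (n - 1)) = - dickson n 1 * dickson n n"
proof -
  show "gap (CARD('a) ^ (n - 1)) (totalP (dickson n n :: 'a mpoly))"
    using CC0_coeff(1)[OF assms(1,2)] by (simp add: gap_def totalP_dickson[OF assms(1)])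
  have d1: "dickson n (Suc 0) = (- 1 :: 'a mpoly) * cc n (n - 1)" using dickson_cc[OF assms(1), of 1 n] assms by simp
  have dn: "dickson n n = (- 1 :: 'a mpoly) ^ n * cc n 0" using dickson_cc[OF assms(1), of n n] by simp
  have "coeff (totalP (dickson n n :: 'a mpoly)) (CARD('a) ^ (n - 1)) = (-1) ^ n * coeff (CC n 0) (CARD('a) ^ (n - 1))"
    unfolding totalP_dickson[OF assms(1) order_refl] by simp
  thus "coeff (totalP (dickson n n :: 'a mpoly)) (CARD('a) ^ (n - 1)) = - dickson n 1 * dickson n n"
    using CC0_coeff(2)[OF assms(1,2)] by (simp add: d1 dn mult_ac)
qed

lemma M2:
  fixes dummy :: "'a::{field,finite}"
  assumes "prime CARD('a)" "1 \<le> i" "i < n"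
  shows "gap (CARD('a) ^ (n - i - 1)) (totalP (dickson n i :: 'a mpoly))"
    "coeff (totalP (dickson n i :: 'a mpoly)) (CARD('a) ^ (n - i - 1)) = dickson n (i + 1)"
proof -
  have e: "0 < n - i" "n - i < n" "1 \<le> n" using assms by auto
  show "gap (CARD('a) ^ (n - i - 1)) (totalP (dickson n i :: 'a mpoly))"
    using CCe_coeff(1)[OF assms(1) e(3) e(1,2)] assms by (simp add: gap_def totalP_dickson[OF assms(1)])
  have di: "dickson n (Suc i) = (- 1 :: 'a mpoly) ^ (i + 1) * cc n (n - i - 1)"
    using dickson_cc[OF assms(1), of "i + 1" n] assms by simp
  have "coeff (totalP (dickson n i :: 'a mpoly)) (CARD('a) ^ (n - i - 1)) = (-1) ^ i * coeff (CC n (n - i)) (CARD('a) ^ (n - i - 1))"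
    unfolding totalP_dickson[OF assms(1) less_imp_le[OF assms(3)]] by simp
  thus "coeff (totalP (dickson n i :: 'a mpoly)) (CARD('a) ^ (n - i - 1)) = dickson n (i + 1)"
    using CCe_coeff(2)[OF assms(1) e(3) e(1,2)] assms by (simp add: di)
qed


definition Mon :: "nat \<Rightarrow> (nat \<Rightarrow> nat) \<Rightarrow> 'a::{comm_ring_1,finite} mpoly" where
  "Mon n e = (\<Prod>l\<in>{1..n}. dickson n l ^ e l)"

definition GG :: "nat \<Rightarrow> nat \<Rightarrow> nat" where
  "GG n l = (if l = n then n - 1 else n - l - 1)"

definition valv :: "nat \<Rightarrow> nat \<Rightarrow> 'a::{comm_ring_1,finite} mpoly" where
  "valv n l = (if l = n then - dickson n 1 * dickson n n else dickson n (Suc l))"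

lemma Mon_add: "Mon n (\<lambda>l. e l + f l) = (Mon n e :: 'a::{comm_ring_1,finite} mpoly) * Mon n f"
  by (simp add: Mon_def power_add prod.distrib)

lemma Mon_delta: "j \<in> {1..n} \<Longrightarrow> Mon n (\<lambda>l. if l = j then x else 0) = (dickson n j ^ x :: 'a::{comm_ring_1,finite} mpoly)"
  unfolding Mon_def by (simp add: if_distrib[where f="\<lambda>x. _ ^ x"] prod.delta' cong: if_cong)

lemma Mon_remove: "l \<in> {1..n} \<Longrightarrow>
  dickson n l ^ x * (\<Prod>l'\<in>{1..n} - {l}. dickson n l' ^ e l') = (Mon n (e(l := x)) :: 'a::{comm_ring_1,finite} mpoly)"
  unfolding Mon_def by (subst prod.remove[of _ l]) (auto intro!: prod.cong)

context
  fixes dummy :: "'a::{field,finite}" and n :: nat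
  assumes p_prime: "prime CARD('a)" and n1: "1 \<le> n"
begin

lemma CHAR_S: "CHAR('a mpoly) = CARD('a)" by (rule CHAR_m[OF p_prime])

lemma FL1:
  assumes "l \<in> {1..n}"
  shows "gap (CARD('a) ^ GG n l) (totalP (dickson n l :: 'a mpoly))"
    "coeff (totalP (dickson n l :: 'a mpoly)) (CARD('a) ^ GG n l) = valv n l"
proof -
  have "gap (CARD('a) ^ GG n l) (totalP (dickson n l :: 'a mpoly)) \<and>
     coeff (totalP (dickson n l :: 'a mpoly)) (CARD('a) ^ GG n l) = valv n l"
  proof (cases "l = n")
    case True
    thus ?thesis using M3[OF p_prime n1] by (simp add: GG_def valv_def)
  next
    case False
    hence "1 \<le> l" "l < n" using assms by auto
    thus ?thesis using M2[OF p_prime, of l n] False by (simp add: GG_def valv_def)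
  qed
  thus "gap (CARD('a) ^ GG n l) (totalP (dickson n l :: 'a mpoly))"
    "coeff (totalP (dickson n l :: 'a mpoly)) (CARD('a) ^ GG n l) = valv n l" by auto
qed

lemma FL2:
  assumes "l \<in> {1..n}" "x = CARD('a) ^ h * w"
  shows "gap (CARD('a) ^ (GG n l + h)) (totalP (dickson n l ^ x :: 'a mpoly))"
    "coeff (totalP (dickson n l ^ x :: 'a mpoly)) (CARD('a) ^ (GG n l + h)) =
       of_nat w * valv n l ^ (CARD('a) ^ h) * dickson n l ^ (CARD('a) ^ h * (w - 1))"
proof -
  let ?A = "totalP (dickson n l :: 'a mpoly)"
  have pr: "prime CHAR('a mpoly)" by (simp add: CHAR_S p_prime)
  have P: "CARD('a) ^ h = CHAR('a mpoly) ^ h" by (simp add: CHAR_S)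
  have t: "totalP (dickson n l ^ x :: 'a mpoly) = (?A ^ (CARD('a) ^ h)) ^ w"
    by (simp add: assms(2) totalP_power power_mult)
  have g1: "gap (CARD('a) ^ GG n l * CARD('a) ^ h) (?A ^ (CARD('a) ^ h))"
    by (rule gap_frob(1)[OF pr P FL1(1)[OF assms(1)]])
  have c1: "coeff (?A ^ (CARD('a) ^ h)) (CARD('a) ^ GG n l * CARD('a) ^ h) = valv n l ^ (CARD('a) ^ h)"
    using gap_frob(2)[OF pr P FL1(1)[OF assms(1)]] FL1(2)[OF assms(1)] by simp
  have c0: "coeff (?A ^ (CARD('a) ^ h)) 0 = dickson n l ^ (CARD('a) ^ h)"
    by (simp add: coeff_0_power totalP_coeff0)
  have pos: "0 < CARD('a) ^ GG n l * CARD('a) ^ h" by simp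
  note gp = gap_power[OF g1 pos, of w]
  show "gap (CARD('a) ^ (GG n l + h)) (totalP (dickson n l ^ x :: 'a mpoly))"
    using gp by (simp add: t power_add)
  show "coeff (totalP (dickson n l ^ x :: 'a mpoly)) (CARD('a) ^ (GG n l + h)) =
       of_nat w * valv n l ^ (CARD('a) ^ h) * dickson n l ^ (CARD('a) ^ h * (w - 1))"
    using gp by (simp add: t power_add c1 c0 power_mult)
qed

lemma PL:
  assumes N: "0 < N" and hw: "\<forall>l\<in>{1..n}. \<exists>h w. e l = CARD('a) ^ h * w \<and> N \<le> CARD('a) ^ (GG n l + h)"
  shows "steenrodP N (Mon n e :: 'a mpoly) =
    (\<Sum>l\<in>{1..n}. coeff (totalP (dickson n l ^ e l :: 'a mpoly)) N * (\<Prod>l'\<in>{1..n} - {l}. dickson n l' ^ e l'))"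
proof -
  have g: "\<forall>l\<in>{1..n}. gap N (totalP (dickson n l ^ e l :: 'a mpoly))"
  proof
    fix l assume l: "l \<in> {1..n}"
    then obtain h w where "e l = CARD('a) ^ h * w" "N \<le> CARD('a) ^ (GG n l + h)" using hw by blast
    thus "gap N (totalP (dickson n l ^ e l :: 'a mpoly))" using FL2(1)[OF l] gap_mono by blast
  qed
  have "steenrodP N (Mon n e :: 'a mpoly) = coeff (\<Prod>l\<in>{1..n}. totalP (dickson n l ^ e l :: 'a mpoly)) N"
    by (simp add: steenrodP_def Mon_def totalP_prod)
  also have "\<dots> = (\<Sum>l\<in>{1..n}. coeff (totalP (dickson n l ^ e l :: 'a mpoly)) N *
       (\<Prod>l'\<in>{1..n} - {l}. coeff (totalP (dickson n l' ^ e l' :: 'a mpoly)) 0))"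
    using gap_prod[OF _ g N] by simp
  finally show ?thesis by (simp add: totalP_coeff0)
qed

lemma coeff_inactive:
  assumes "l \<in> {1..n}" "x = CARD('a) ^ h * w" "0 < N" "N < CARD('a) ^ (GG n l + h)"
  shows "coeff (totalP (dickson n l ^ x :: 'a mpoly)) N = 0"
  using FL2(1)[OF assms(1,2)] assms(3,4) by (rule gap_coeff)

lemma single_active:
  assumes l0: "l0 \<in> {1..n}" and e0: "e l0 = CARD('a) ^ h0 * w0" and N: "N = CARD('a) ^ (GG n l0 + h0)"
    and others: "\<forall>l\<in>{1..n} - {l0}. \<exists>h w. e l = CARD('a) ^ h * w \<and> N < CARD('a) ^ (GG n l + h)"
  shows "steenrodP N (Mon n e :: 'a mpoly) =
    of_nat w0 * valv n l0 ^ (CARD('a) ^ h0) * Mon n (e(l0 := CARD('a) ^ h0 * (w0 - 1)))"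
proof -
  have N0: "0 < N" using N by simp
  have hw: "\<forall>l\<in>{1..n}. \<exists>h w. e l = CARD('a) ^ h * w \<and> N \<le> CARD('a) ^ (GG n l + h)"
    using others e0 N by (metis Diff_iff empty_iff insert_iff less_imp_le_nat order_refl)
  have rest0: "(\<Sum>l\<in>{1..n} - {l0}. coeff (totalP (dickson n l ^ e l :: 'a mpoly)) N * (\<Prod>l'\<in>{1..n} - {l}. dickson n l' ^ e l')) = 0"
  proof (rule sum.neutral, rule ballI)
    fix l assume l: "l \<in> {1..n} - {l0}"
    then obtain h w where "e l = CARD('a) ^ h * w" "N < CARD('a) ^ (GG n l + h)" using others by blast
    thus "coeff (totalP (dickson n l ^ e l :: 'a mpoly)) N * (\<Prod>l'\<in>{1..n} - {l}. dickson n l' ^ e l') = 0"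
      using coeff_inactive[of l "e l" h w N] l N0 by simp
  qed
  have "steenrodP N (Mon n e :: 'a mpoly) =
    (\<Sum>l\<in>{1..n}. coeff (totalP (dickson n l ^ e l :: 'a mpoly)) N * (\<Prod>l'\<in>{1..n} - {l}. dickson n l' ^ e l'))"
    by (rule PL[OF N0 hw])
  also have "\<dots> = coeff (totalP (dickson n l0 ^ e l0 :: 'a mpoly)) N * (\<Prod>l'\<in>{1..n} - {l0}. dickson n l' ^ e l') +
     (\<Sum>l\<in>{1..n} - {l0}. coeff (totalP (dickson n l ^ e l :: 'a mpoly)) N * (\<Prod>l'\<in>{1..n} - {l}. dickson n l' ^ e l'))"
    by (rule sum.remove) (use l0 in auto)
  also have "\<dots> = coeff (totalP (dickson n l0 ^ e l0 :: 'a mpoly)) N * (\<Prod>l'\<in>{1..n} - {l0}. dickson n l' ^ e l')"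
    using rest0 by simp
  also have "\<dots> = of_nat w0 * valv n l0 ^ (CARD('a) ^ h0) * (dickson n l0 ^ (CARD('a) ^ h0 * (w0 - 1)) *
       (\<Prod>l'\<in>{1..n} - {l0}. dickson n l' ^ e l'))"
    using FL2(2)[OF l0 e0] N by (simp add: mult.assoc)
  also have "\<dots> = of_nat w0 * valv n l0 ^ (CARD('a) ^ h0) * Mon n (e(l0 := CARD('a) ^ h0 * (w0 - 1)))"
    by (subst Mon_remove[OF l0, symmetric]) (rule refl)
  finally show ?thesis .
qed

lemma none_active:
  assumes N: "0 < N"
    and all: "\<forall>l\<in>{1..n}. \<exists>h w. e l = CARD('a) ^ h * w \<and> N < CARD('a) ^ (GG n l + h)"
  shows "steenrodP N (Mon n e :: 'a mpoly) = 0"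
proof -
  have hw: "\<forall>l\<in>{1..n}. \<exists>h w. e l = CARD('a) ^ h * w \<and> N \<le> CARD('a) ^ (GG n l + h)"
    using all less_imp_le_nat by blast
  show ?thesis unfolding PL[OF N hw]
  proof (rule sum.neutral, rule ballI)
    fix l assume l: "l \<in> {1..n}"
    then obtain h w where "e l = CARD('a) ^ h * w" "N < CARD('a) ^ (GG n l + h)" using all by blast
    thus "coeff (totalP (dickson n l ^ e l :: 'a mpoly)) N * (\<Prod>l'\<in>{1..n} - {l}. dickson n l' ^ e l') = 0"
      using coeff_inactive[of l "e l" h w N] l N by simp
  qed
qed

lemma all_active:
  assumes N: "0 < N" and hw: "\<forall>l\<in>{1..n}. e l = CARD('a) ^ hx l * ww l \<and> N = CARD('a) ^ (GG n l + hx l)"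
  shows "steenrodP N (Mon n e :: 'a mpoly) =
    (\<Sum>l\<in>{1..n}. of_nat (ww l) * valv n l ^ (CARD('a) ^ hx l) * Mon n (e(l := CARD('a) ^ hx l * (ww l - 1))))"
proof -
  have hw': "\<forall>l\<in>{1..n}. \<exists>h w. e l = CARD('a) ^ h * w \<and> N \<le> CARD('a) ^ (GG n l + h)"
    using hw by (metis order_refl)
  show ?thesis unfolding PL[OF N hw']
  proof (rule sum.cong[OF refl])
    fix l assume l: "l \<in> {1..n}"
    have "coeff (totalP (dickson n l ^ e l :: 'a mpoly)) N = of_nat (ww l) * valv n l ^ (CARD('a) ^ hx l) * dickson n l ^ (CARD('a) ^ hx l * (ww l - 1))"
      using FL2(2)[OF l, of "e l" "hx l" "ww l"] hw l by simp
    thus "coeff (totalP (dickson n l ^ e l :: 'a mpoly)) N * (\<Prod>l'\<in>{1..n} - {l}. dickson n l' ^ e l') =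
      of_nat (ww l) * valv n l ^ (CARD('a) ^ hx l) * Mon n (e(l := CARD('a) ^ hx l * (ww l - 1)))"
      by (subst Mon_remove[OF l, symmetric]) (simp add: mult.assoc)
  qed
qed

end


definition life :: "nat \<Rightarrow> nat \<Rightarrow> nat" where "life n i = (if i = n then n else n - i)"

definition EE :: "nat \<Rightarrow> nat \<Rightarrow> (nat \<Rightarrow> nat) \<Rightarrow> (nat \<Rightarrow> nat) \<Rightarrow> nat \<Rightarrow> nat \<Rightarrow> nat \<Rightarrow> nat" where
  "EE q n k m i s l = (if i = n then m l + (if l = s then q ^ k n else 0)
     else m l - (if l = i then q ^ k i else 0) + (if l = i + s then q ^ k i else 0))"

lemma neg_pow_char:
  assumes "prime CHAR('b::comm_ring_1)"
  shows "(- x :: 'b) ^ (CHAR('b) ^ h) = - (x ^ (CHAR('b) ^ h))"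
proof (induction h)
  case (Suc h)
  have "(- x :: 'b) ^ (CHAR('b) ^ Suc h) = ((- x) ^ (CHAR('b) ^ h)) ^ CHAR('b)"
    by (simp only: power_Suc2 power_mult)
  also have "\<dots> = (- (x ^ (CHAR('b) ^ h))) ^ CHAR('b)" using Suc by simp
  also have "\<dots> = - ((x ^ (CHAR('b) ^ h)) ^ CHAR('b))"
    by (rule minus_power_prime_CHAR) (use assms in auto)
  also have "\<dots> = - (x ^ (CHAR('b) ^ Suc h))" by (simp only: power_Suc2 power_mult)
  finally show ?case .
qed simp

context
  fixes dummy :: "'a::{field,finite}" and n c :: nat and a k m :: "nat \<Rightarrow> nat"
  assumes p_prime: "prime CARD('a)"
    and n_ge: "n \<ge> 1"
    and c_ge: "c \<ge> n - 1"
    and k_def: "\<And>i. k i = (if i = n then c + 1 - n else c + i + 1 - n)"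
    and a_lt: "\<forall>i\<in>{1..n}. a i < CARD('a)"
    and m_def: "\<And>i. m i = a i * CARD('a) ^ k i"
begin

lemma pp2: "CARD('a) \<ge> 2" using card_ge2[OF p_prime] .

lemma kG: "l \<in> {1..n} \<Longrightarrow> GG n l + k l = c"
  using c_ge n_ge by (auto simp: GG_def k_def)

lemma k_lt: "1 \<le> l \<Longrightarrow> l < n \<Longrightarrow> k l = k n + l"
  using c_ge n_ge by (auto simp: k_def)

lemma pow_less: "x < y \<Longrightarrow> CARD('a) ^ x < CARD('a) ^ y"
  using pp2 by (simp add: power_strict_increasing)

lemma ofnat_p_mult: "(of_nat (CARD('a) * x + 1) :: 'a mpoly) = 1"
proof -
  have "(of_nat CARD('a) :: 'a mpoly) = 0"
    using of_nat_CHAR[where 'a="'a mpoly"] by (simp add: CHAR_m[OF p_prime])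
  thus ?thesis by simp
qed

lemma inact_m:
  assumes "l \<in> {1..n}" "1 \<le> s" "s \<le> c"
  shows "\<exists>h w. m l = CARD('a) ^ h * w \<and> CARD('a) ^ (c - s) < CARD('a) ^ (GG n l + h)"
  using assms kG[OF assms(1)] by (intro exI[of _ "k l"] exI[of _ "a l"]) (auto simp: m_def intro!: pow_less)

lemma inact_gen:
  assumes "l \<in> {1..n}" "x = CARD('a) ^ k l * w" "1 \<le> s" "s \<le> c"
  shows "\<exists>h w. x = CARD('a) ^ h * w \<and> CARD('a) ^ (c - s) < CARD('a) ^ (GG n l + h)"
  using assms kG[OF assms(1)] by (intro exI[of _ "k l"] exI[of _ w]) (auto intro!: pow_less)

definition TT :: "nat \<Rightarrow> nat \<Rightarrow> 'a mpoly" where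
  "TT i s = mconst (if i = n then - of_nat (a n) else of_nat (a i)) * Mon n (EE CARD('a) n k m i s)"


lemma mdiff: "m l - CARD('a) ^ k l = CARD('a) ^ k l * (a l - 1)"
  by (metis diff_mult_distrib2 mult.commute mult.right_neutral m_def)

lemma term0:
  assumes l: "l \<in> {1..n}" and al: "a l \<noteq> 0"
  shows "of_nat (a l) * valv n l ^ (CARD('a) ^ k l) * Mon n (m(l := CARD('a) ^ k l * (a l - 1))) = TT l 1"
proof (cases "l = n")
  case False
  hence ln: "l < n" "Suc l \<in> {1..n}" using l by auto
  have e: "EE CARD('a) n k m l 1 = (\<lambda>j. (m(l := CARD('a) ^ k l * (a l - 1))) j + (if j = Suc l then CARD('a) ^ k l else 0))"
    using False by (auto simp: EE_def mdiff fun_eq_iff)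
  have "Mon n (EE CARD('a) n k m l 1) = (Mon n (m(l := CARD('a) ^ k l * (a l - 1))) :: 'a mpoly) * dickson n (Suc l) ^ CARD('a) ^ k l"
    unfolding e Mon_add Mon_delta[OF ln(2)] ..
  thus ?thesis using False by (simp add: TT_def valv_def mconst_of_nat mult_ac)
next
  case True
  have one: "1 \<in> {1..n}" using n_ge by auto
  have e: "EE CARD('a) n k m n 1 = (\<lambda>j. ((m(n := CARD('a) ^ k n * (a n - 1))) j +
        (if j = 1 then CARD('a) ^ k n else 0)) + (if j = n then CARD('a) ^ k n else 0))"
    using True al by (auto simp: EE_def fun_eq_iff m_def algebra_simps diff_mult_distrib2)
  have "Mon n (EE CARD('a) n k m n 1) = (Mon n (m(n := CARD('a) ^ k n * (a n - 1))) :: 'a mpoly) *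
      dickson n 1 ^ CARD('a) ^ k n * dickson n n ^ CARD('a) ^ k n"
    unfolding e Mon_add Mon_delta[OF one] Mon_delta[OF l[unfolded True]] ..
  moreover have "valv n n ^ (CARD('a) ^ k n) = - (dickson n 1 ^ CARD('a) ^ k n * dickson n n ^ CARD('a) ^ k n :: 'a mpoly)"
    using neg_pow_char[where 'b="'a mpoly", OF prime_CHAR_m[OF p_prime], of "dickson n 1 * dickson n n" "k n"]
    by (simp add: valv_def CHAR_m[OF p_prime] power_mult_distrib)
  ultimately show ?thesis using True by (simp add: TT_def mconst_of_nat mconst_uminus mult_ac)
qed

lemma stage0:
  "steenrodP (CARD('a) ^ c) (Mon n m :: 'a mpoly) = (\<Sum>i\<in>{i\<in>{1..n}. a i \<noteq> 0}. TT i 1)"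
proof -
  have hw: "\<forall>l\<in>{1..n}. m l = CARD('a) ^ k l * a l \<and> CARD('a) ^ c = CARD('a) ^ (GG n l + k l)"
    using kG by (simp add: m_def mult.commute)
  have "steenrodP (CARD('a) ^ c) (Mon n m :: 'a mpoly) =
    (\<Sum>l\<in>{1..n}. of_nat (a l) * valv n l ^ (CARD('a) ^ k l) * Mon n (m(l := CARD('a) ^ k l * (a l - 1))))"
    by (rule all_active[OF p_prime n_ge _ hw]) simp
  also have "\<dots> = (\<Sum>l\<in>{i\<in>{1..n}. a i \<noteq> 0}. of_nat (a l) * valv n l ^ (CARD('a) ^ k l) * Mon n (m(l := CARD('a) ^ k l * (a l - 1))))"
    by (rule sum.mono_neutral_right) auto
  also have "\<dots> = (\<Sum>i\<in>{i\<in>{1..n}. a i \<noteq> 0}. TT i 1)"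
    by (rule sum.cong[OF refl], rule term0) auto
  finally show ?thesis .
qed


lemma Mon_shift: "j0 \<in> {1..n} \<Longrightarrow>
  Mon n (\<lambda>j. e j + (if j = j0 then x else 0)) = (Mon n e :: 'a mpoly) * dickson n j0 ^ x"
  by (simp only: Mon_add Mon_delta)

lemma stepT:
  assumes i: "i \<in> {1..n}" and ai: "a i \<noteq> 0" and s1: "1 \<le> s" and sl: "s \<le> life n i" and sc: "s \<le> c"
  shows "steenrodP (CARD('a) ^ (c - s)) (Mon n (EE CARD('a) n k m i s) :: 'a mpoly) =
    (if s < life n i then Mon n (EE CARD('a) n k m i (Suc s)) else 0)"
proof -
  let ?P = "CARD('a)"
  let ?E = "EE CARD('a) n k m i s"
  have N0: "0 < ?P ^ (c - s)" by simp
  show ?thesis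
  proof (cases "i = n")
    case False
    hence iln: "i < n" "1 \<le> i" using i by auto
    have Ei: "?E i = ?P ^ k i * (a i - 1)" using False s1 by (simp add: EE_def mdiff)
    have Eo: "l \<noteq> i \<Longrightarrow> l \<noteq> i + s \<Longrightarrow> ?E l = m l" for l using False by (simp add: EE_def)
    have Epos: "?E (i + s) = m (i + s) + ?P ^ k i" using False s1 by (simp add: EE_def)
    show ?thesis
    proof (cases "s < life n i")
      case True
      hence isn: "i + s < n" using False by (simp add: life_def)
      have kis: "k (i + s) = k i + s" using k_lt[of "i + s"] k_lt[of i] iln isn by simp
      have l0: "i + s \<in> {1..n}" using isn iln by simp
      have e0: "?E (i + s) = ?P ^ k i * (a (i + s) * ?P ^ s + 1)"
        using Epos kis by (simp add: m_def power_add algebra_simps)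
      have Ng: "?P ^ (c - s) = ?P ^ (GG n (i + s) + k i)"
      proof -
        have "GG n (i + s) + k i = c - s" using isn iln c_ge by (simp add: GG_def k_def)
        thus ?thesis by simp
      qed
      have oth: "\<forall>l\<in>{1..n} - {i + s}. \<exists>h w. ?E l = ?P ^ h * w \<and> ?P ^ (c - s) < ?P ^ (GG n l + h)"
      proof
        fix l assume l: "l \<in> {1..n} - {i + s}"
        show "\<exists>h w. ?E l = ?P ^ h * w \<and> ?P ^ (c - s) < ?P ^ (GG n l + h)"
        proof (cases "l = i")
          case True thus ?thesis using inact_gen[OF i Ei s1 sc] by simp
        next
          case False thus ?thesis using Eo[of l] l inact_m[of l, OF _ s1 sc] by auto
        qed
      qed
      have h1: "steenrodP (?P ^ (c - s)) (Mon n ?E :: 'a mpoly) =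
        of_nat (a (i + s) * ?P ^ s + 1) * valv n (i + s) ^ (?P ^ k i) *
          Mon n (?E((i + s) := ?P ^ k i * (a (i + s) * ?P ^ s + 1 - 1)))"
        by (rule single_active[OF p_prime n_ge l0 e0 Ng oth])
      have h2: "of_nat (a (i + s) * ?P ^ s + 1) = (1 :: 'a mpoly)"
      proof -
        have eq: "a (i + s) * ?P ^ s + 1 = ?P * (a (i + s) * ?P ^ (s - 1)) + 1"
          using s1 by (cases s) auto
        show ?thesis by (subst eq) (rule ofnat_p_mult)
      qed
      have h3: "valv n (i + s) = (dickson n (Suc (i + s)) :: 'a mpoly)" using isn by (simp add: valv_def)
      have h4: "Mon n (?E((i + s) := ?P ^ k i * (a (i + s) * ?P ^ s + 1 - 1))) * dickson n (Suc (i + s)) ^ (?P ^ k i)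
          = (Mon n (EE CARD('a) n k m i (Suc s)) :: 'a mpoly)"
      proof -
        have sp: "Suc (i + s) \<in> {1..n}" using isn by simp
        have "EE CARD('a) n k m i (Suc s) = (\<lambda>j. (?E((i + s) := ?P ^ k i * (a (i + s) * ?P ^ s + 1 - 1))) j +
             (if j = Suc (i + s) then ?P ^ k i else 0))"
          using False s1 kis by (auto simp: EE_def fun_eq_iff m_def power_add algebra_simps)
        thus ?thesis by (simp only: Mon_shift[OF sp])
      qed
      have "steenrodP (?P ^ (c - s)) (Mon n ?E :: 'a mpoly) =
         1 * dickson n (Suc (i + s)) ^ (?P ^ k i) * Mon n (?E((i + s) := ?P ^ k i * (a (i + s) * ?P ^ s + 1 - 1)))"
        by (simp only: h1 h2 h3)
      also have "\<dots> = Mon n (?E((i + s) := ?P ^ k i * (a (i + s) * ?P ^ s + 1 - 1))) * dickson n (Suc (i + s)) ^ (?P ^ k i)"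
        by (simp only: mult_1_left mult.commute)
      also have "\<dots> = Mon n (EE CARD('a) n k m i (Suc s))" by (rule h4)
      finally show ?thesis using True by simp
    next
      case False2: False
      hence isn: "i + s = n" using sl \<open>i \<noteq> n\<close> iln by (simp add: life_def)
      have kni: "k i = k n + i" using k_lt iln by simp
      have all: "\<forall>l\<in>{1..n}. \<exists>h w. ?E l = ?P ^ h * w \<and> ?P ^ (c - s) < ?P ^ (GG n l + h)"
      proof
        fix l assume l: "l \<in> {1..n}"
        show "\<exists>h w. ?E l = ?P ^ h * w \<and> ?P ^ (c - s) < ?P ^ (GG n l + h)"
        proof (cases "l = i")
          case True thus ?thesis using inact_gen[OF i Ei s1 sc] by simp
        next
          case Fl: False
          show ?thesis
          proof (cases "l = n")
            case True
            have "?E l = ?P ^ k n * (a n + ?P ^ i)"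
              using Epos isn True kni by (simp add: m_def power_add algebra_simps)
            thus ?thesis using inact_gen[OF l _ s1 sc] True by simp
          next
            case False thus ?thesis using Eo[of l] Fl isn l inact_m[of l, OF _ s1 sc] by auto
          qed
        qed
      qed
      show ?thesis using none_active[OF p_prime n_ge N0 all] False2 by simp
    qed
  next
    case True
    have Eo: "l \<noteq> s \<Longrightarrow> ?E l = m l" for l using True by (simp add: EE_def)
    have Es: "?E s = m s + ?P ^ k n" using True by (simp add: EE_def)
    show ?thesis
    proof (cases "s < life n i")
      case True2: True
      hence sn: "s < n" using True by (simp add: life_def)
      have ks: "k s = k n + s" using k_lt[of s] s1 sn by simp
      have l0: "s \<in> {1..n}" using sn s1 by simp
      have e0: "?E s = ?P ^ k n * (a s * ?P ^ s + 1)"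
        using Es ks by (simp add: m_def power_add algebra_simps)
      have Ng: "?P ^ (c - s) = ?P ^ (GG n s + k n)"
      proof -
        have "GG n s + k n = c - s" using sn s1 c_ge by (simp add: GG_def k_def)
        thus ?thesis by simp
      qed
      have oth: "\<forall>l\<in>{1..n} - {s}. \<exists>h w. ?E l = ?P ^ h * w \<and> ?P ^ (c - s) < ?P ^ (GG n l + h)"
        using Eo inact_m[OF _ s1 sc] by auto
      have h1: "steenrodP (?P ^ (c - s)) (Mon n ?E :: 'a mpoly) =
        of_nat (a s * ?P ^ s + 1) * valv n s ^ (?P ^ k n) *
          Mon n (?E(s := ?P ^ k n * (a s * ?P ^ s + 1 - 1)))"
        by (rule single_active[OF p_prime n_ge l0 e0 Ng oth])
      have h2: "of_nat (a s * ?P ^ s + 1) = (1 :: 'a mpoly)"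
      proof -
        have eq: "a s * ?P ^ s + 1 = ?P * (a s * ?P ^ (s - 1)) + 1"
          using s1 by (cases s) auto
        show ?thesis by (subst eq) (rule ofnat_p_mult)
      qed
      have h3: "valv n s = (dickson n (Suc s) :: 'a mpoly)" using sn by (simp add: valv_def)
      have h4: "Mon n (?E(s := ?P ^ k n * (a s * ?P ^ s + 1 - 1))) * dickson n (Suc s) ^ (?P ^ k n)
          = (Mon n (EE CARD('a) n k m i (Suc s)) :: 'a mpoly)"
      proof -
        have sp: "Suc s \<in> {1..n}" using sn by simp
        have "EE CARD('a) n k m i (Suc s) = (\<lambda>j. (?E(s := ?P ^ k n * (a s * ?P ^ s + 1 - 1))) j +
             (if j = Suc s then ?P ^ k n else 0))"
          using True ks by (auto simp: EE_def fun_eq_iff m_def power_add algebra_simps)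
        thus ?thesis by (simp only: Mon_shift[OF sp])
      qed
      have "steenrodP (?P ^ (c - s)) (Mon n ?E :: 'a mpoly) =
         1 * dickson n (Suc s) ^ (?P ^ k n) * Mon n (?E(s := ?P ^ k n * (a s * ?P ^ s + 1 - 1)))"
        by (simp only: h1 h2 h3)
      also have "\<dots> = Mon n (?E(s := ?P ^ k n * (a s * ?P ^ s + 1 - 1))) * dickson n (Suc s) ^ (?P ^ k n)"
        by (simp only: mult_1_left mult.commute)
      also have "\<dots> = Mon n (EE CARD('a) n k m i (Suc s))" by (rule h4)
      finally show ?thesis using True2 by simp
    next
      case False2: False
      hence sn: "s = n" using sl True by (simp add: life_def)
      have all: "\<forall>l\<in>{1..n}. \<exists>h w. ?E l = ?P ^ h * w \<and> ?P ^ (c - s) < ?P ^ (GG n l + h)"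
      proof
        fix l assume l: "l \<in> {1..n}"
        show "\<exists>h w. ?E l = ?P ^ h * w \<and> ?P ^ (c - s) < ?P ^ (GG n l + h)"
        proof (cases "l = n")
          case True
          have E: "?E l = ?P ^ k l * (a n + 1)" using Es sn True by (simp add: m_def algebra_simps)
          show ?thesis by (rule inact_gen[OF l E s1 sc])
        next
          case False thus ?thesis using Eo[of l] sn l inact_m[of l, OF _ s1 sc] by auto
        qed
      qed
      show ?thesis using none_active[OF p_prime n_ge N0 all] False2 by simp
    qed
  qed
qed


lemma steen_sum: "steenrodP r (sum f A) = (\<Sum>x\<in>A. steenrodP r (f x))"
  by (simp add: steenrodP_def totalP_sum coeff_sum)

lemma steen_scal: "steenrodP r (mconst u * x) = mconst u * steenrodP r x"
  by (simp add: steenrodP_def totalP_mult totalP_mconst)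

lemma life_ge1: "i \<in> {1..n} \<Longrightarrow> 1 \<le> life n i"
  by (auto simp: life_def)

lemma claim:
  "1 \<le> s \<Longrightarrow> s \<le> c + 1 \<Longrightarrow>
    Pcj c s (Mon n m :: 'a mpoly) = (\<Sum>i\<in>{i\<in>{1..n}. a i \<noteq> 0 \<and> s \<le> life n i}. TT i s)"
proof (induction s)
  case 0 thus ?case by simp
next
  case (Suc s)
  show ?case
  proof (cases "s = 0")
    case True
    have "{i\<in>{1..n}. a i \<noteq> 0 \<and> Suc s \<le> life n i} = {i\<in>{1..n}. a i \<noteq> 0}"
      using True life_ge1 by auto
    thus ?thesis using True stage0 by simp
  next
    case False
    hence s1: "1 \<le> s" and sc: "s \<le> c" using Suc.prems by auto
    have IH: "Pcj c s (Mon n m :: 'a mpoly) = (\<Sum>i\<in>{i\<in>{1..n}. a i \<noteq> 0 \<and> s \<le> life n i}. TT i s)"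
      using Suc.IH s1 Suc.prems by simp
    have "Pcj c (Suc s) (Mon n m :: 'a mpoly) = steenrodP (CARD('a) ^ (c - s)) (Pcj c s (Mon n m))"
      by simp
    also have "\<dots> = (\<Sum>i\<in>{i\<in>{1..n}. a i \<noteq> 0 \<and> s \<le> life n i}. steenrodP (CARD('a) ^ (c - s)) (TT i s))"
      by (simp add: IH steen_sum)
    also have "\<dots> = (\<Sum>i\<in>{i\<in>{1..n}. a i \<noteq> 0 \<and> s \<le> life n i}. if s < life n i then TT i (Suc s) else 0)"
    proof (rule sum.cong[OF refl])
      fix i assume i: "i \<in> {i\<in>{1..n}. a i \<noteq> 0 \<and> s \<le> life n i}"
      show "steenrodP (CARD('a) ^ (c - s)) (TT i s) = (if s < life n i then TT i (Suc s) else 0)"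
        using stepT[of i s] i s1 sc by (simp add: TT_def steen_scal)
    qed
    also have "\<dots> = (\<Sum>i\<in>{i\<in>{1..n}. a i \<noteq> 0 \<and> Suc s \<le> life n i}. TT i (Suc s))"
    proof -
      have "{i\<in>{i\<in>{1..n}. a i \<noteq> 0 \<and> s \<le> life n i}. s < life n i} = {i\<in>{1..n}. a i \<noteq> 0 \<and> Suc s \<le> life n i}"
        by auto
      thus ?thesis by (simp add: sum.inter_filter[symmetric])
    qed
    finally show ?thesis .
  qed
qed

end

lemma life_inj: "i \<in> {1..n} \<Longrightarrow> i' \<in> {1..n} \<Longrightarrow> life n i = life n i' \<Longrightarrow> i = i'"
  by (auto simp: life_def split: if_splits)

theorem lemma3:
  fixes n c :: nat and a :: "nat \<Rightarrow> nat" and k m :: "nat \<Rightarrow> nat" and j :: nat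
    and d :: "'a::{field,finite} mpoly"
  assumes p_prime: "prime (CARD('a))"
    and n_ge: "n \<ge> 1"
    and c_ge: "c \<ge> n - 1"
    and k_def: "\<And>i. k i = (if i = n then c + 1 - n else c + i + 1 - n)"
    and a_lt: "\<forall>i\<in>{1..n}. a i < CARD('a)"
    and a_nz: "\<exists>i\<in>{1..n}. a i \<noteq> 0"
    and m_def: "\<And>i. m i = a i * CARD('a) ^ k i"
    and d_def: "d = (\<Prod>i\<in>{1..n}. dickson n i ^ m i)"
    and j_def: "j = Max ((if a n \<noteq> 0 then {n} else {}) \<union> {n - i | i. 1 \<le> i \<and> i < n \<and> a i \<noteq> 0})"
  shows "\<exists>u::'a. u \<noteq> 0 \<and>
      (if j = n then Pcj c j d = mconst u * dickson n n ^ (CARD('a) ^ k n) * d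
       else Pcj c j d = mconst u * dickson n n ^ (CARD('a) ^ k (n - j)) *
              (\<Prod>i\<in>{1..n}. dickson n i ^ (if i = n - j then m i - CARD('a) ^ k (n - j) else m i)))
      \<and> (\<forall>t::nat. j < t \<and> t \<le> c + 1 \<longrightarrow> Pcj c t d = 0)"
proof -
  let ?P = "CARD('a)"
  let ?I = "{i\<in>{1..n}. a i \<noteq> 0}"
  note cl = claim[where 'a='a, OF p_prime n_ge c_ge k_def a_lt m_def]
  have dM: "d = Mon n m" by (simp add: d_def Mon_def)
  have fI: "finite ?I" by simp
  have neI: "?I \<noteq> {}" using a_nz by auto
  have setq: "(if a n \<noteq> 0 then {n} else {}) \<union> {n - i | i. 1 \<le> i \<and> i < n \<and> a i \<noteq> 0} = life n ` ?I"
  proof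
    show "(if a n \<noteq> 0 then {n} else {}) \<union> {n - i | i. 1 \<le> i \<and> i < n \<and> a i \<noteq> 0} \<subseteq> life n ` ?I"
    proof
      fix x assume "x \<in> (if a n \<noteq> 0 then {n} else {}) \<union> {n - i | i. 1 \<le> i \<and> i < n \<and> a i \<noteq> 0}"
      then consider "a n \<noteq> 0" "x = n" | i where "1 \<le> i" "i < n" "a i \<noteq> 0" "x = n - i"
        by (auto split: if_splits)
      thus "x \<in> life n ` ?I"
      proof cases
        case 1 thus ?thesis using n_ge by (intro rev_image_eqI[of n]) (auto simp: life_def)
      next
        case 2 thus ?thesis by (intro rev_image_eqI[of i]) (auto simp: life_def)
      qed
    qed
    show "life n ` ?I \<subseteq> (if a n \<noteq> 0 then {n} else {}) \<union> {n - i | i. 1 \<le> i \<and> i < n \<and> a i \<noteq> 0}"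
      by (auto simp: life_def)
  qed
  have jM: "j = Max (life n ` ?I)" using j_def setq by simp
  have "Max (life n ` ?I) \<in> life n ` ?I" by (rule Max_in) (use fI neI in auto)
  then obtain i0 where i0: "i0 \<in> ?I" "life n i0 = j" using jM by (metis (no_types, lifting) imageE)
  have le_j: "i \<in> ?I \<Longrightarrow> life n i \<le> j" for i using jM fI by simp
  have j1: "1 \<le> j" using i0 life_ge1[of n i0] by (simp add: life_def split: if_splits)
  have jc: "j \<le> c + 1" using i0 c_ge by (auto simp: life_def split: if_splits)
  have single: "{i\<in>{1..n}. a i \<noteq> 0 \<and> j \<le> life n i} = {i0}"
  proof
    show "{i\<in>{1..n}. a i \<noteq> 0 \<and> j \<le> life n i} \<subseteq> {i0}"
    proof
      fix i assume i: "i \<in> {i\<in>{1..n}. a i \<noteq> 0 \<and> j \<le> life n i}"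
      hence "life n i = life n i0" using le_j[of i] i0 by auto
      thus "i \<in> {i0}" using life_inj[of i n i0] i i0 by auto
    qed
  qed (use i0 in auto)
  define u :: 'a where "u = (if i0 = n then - of_nat (a n) else of_nat (a i0))"
  have Pj: "Pcj c j d = mconst u * Mon n (EE ?P n k m i0 j)"
    using cl[OF j1 jc] single by (simp add: dM TT_def[OF p_prime n_ge c_ge k_def a_lt m_def] u_def)
  have u0: "u \<noteq> 0"
  proof -
    have "0 < a i0" "a i0 < ?P" using i0 a_lt by auto
    hence "\<not> CHAR('a) dvd a i0" using CHAR_card[OF p_prime] by (auto dest: dvd_imp_le)
    hence "(of_nat (a i0) :: 'a) \<noteq> 0" by (simp add: of_nat_eq_0_iff_char_dvd)
    thus ?thesis by (auto simp: u_def)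
  qed
  have zero: "\<forall>t::nat. j < t \<and> t \<le> c + 1 \<longrightarrow> Pcj c t d = 0"
  proof (intro allI impI)
    fix t assume t: "j < t \<and> t \<le> c + 1"
    have e: "{i\<in>{1..n}. a i \<noteq> 0 \<and> t \<le> life n i} = {}" using le_j t by fastforce
    have "Pcj c t d = (\<Sum>i\<in>{i\<in>{1..n}. a i \<noteq> 0 \<and> t \<le> life n i}. TT n a k m i t)"
      unfolding dM by (rule cl) (use t j1 in auto)
    thus "Pcj c t d = 0" by (simp only: e sum.empty)
  qed
  show ?thesis
  proof (intro exI[of _ u] conjI u0 zero)
    show "if j = n then Pcj c j d = mconst u * dickson n n ^ (?P ^ k n) * d
       else Pcj c j d = mconst u * dickson n n ^ (?P ^ k (n - j)) *
              (\<Prod>i\<in>{1..n}. dickson n i ^ (if i = n - j then m i - ?P ^ k (n - j) else m i))"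
    proof (cases "j = n")
      case True
      hence i0n: "i0 = n" using i0 by (auto simp: life_def split: if_splits)
      have nn: "n \<in> {1..n}" using n_ge by simp
      have "EE ?P n k m i0 j = (\<lambda>l. m l + (if l = n then ?P ^ k n else 0))"
        using True i0n by (simp add: EE_def fun_eq_iff)
      hence "Mon n (EE ?P n k m i0 j) = (Mon n m :: 'a mpoly) * dickson n n ^ (?P ^ k n)"
        by (simp only: Mon_add Mon_delta[OF nn])
      thus ?thesis using True Pj by (simp add: dM mult_ac)
    next
      case False
      hence i0n: "i0 \<noteq> n" "i0 + j = n" "i0 = n - j" using i0 by (auto simp: life_def split: if_splits)
      have nn: "n \<in> {1..n}" using n_ge by simp
      have "EE ?P n k m i0 j = (\<lambda>l. (\<lambda>i. if i = n - j then m i - ?P ^ k (n - j) else m i) l + (if l = n then ?P ^ k (n - j) else 0))"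
        using i0n by (auto simp: EE_def fun_eq_iff)
      hence "Mon n (EE ?P n k m i0 j) = (Mon n (\<lambda>i. if i = n - j then m i - ?P ^ k (n - j) else m i) :: 'a mpoly) * dickson n n ^ (?P ^ k (n - j))"
        by (simp only: Mon_add Mon_delta[OF nn])
      thus ?thesis using False Pj by (simp add: Mon_def mult_ac)
    qed
  qed
qed


end
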